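(* Let $\mathcal{X}$ be a complex Euclidean space of dimension $d$, and let $\rho,\sigma$ be positive definite operators on $\mathcal{X}$ with eigenvalues $\lambda_1^\downarrow(\rho)\ge\cdots\ge\lambda_d^\downarrow(\rho)$ and $\lambda_1^\downarrow(\sigma)\ge\cdots\ge\lambda_d^\downarrow(\sigma)$, and let $\lambda_j^\uparrow(\sigma)=\lambda_{d+1-j}^\downarrow(\sigma)$. Then $$\max_{\Phi}S(\Phi(\rho)\,\|\,\sigma)=\operatorname{Tr}(\rho\log\rho)-\sum_{j=1}^d\lambda_j^\downarrow(\rho)\log\lambda_j^\uparrow(\sigma),$$ where the maximum is over all bi-stochastic maps $\Phi$ on the operators on $\mathcal{X}$; in particular this maximum coincides with $\max_{U\in U(\mathcal{X})}S(U\rho U^*\|\sigma)$.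
   Context: A bi-stochastic map (bi-stochastic quantum channel) on $\mathcal{X}$ is a completely positive, trace-preserving, unital linear map $\Phi$ from the operators on $\mathcal{X}$ to themselves ($\Phi(\mathbb{1})=\mathbb{1}$). $U(\mathcal{X})$ denotes the group of unitary operators on $\mathcal{X}$. Logarithms are base 2 and are applied to positive definite operators via their spectral decomposition. For positive definite $P,Q$ on $\mathcal{X}$, the relative entropy is $S(P\|Q)=\operatorname{Tr}(P\log P)-\operatorname{Tr}(P\log Q)$. *)

theory Defs
  imports "Jordan_Normal_Form.Schur_Decomposition" "Jordan_Normal_Form.Char_Poly"
begin

(* Operators on a complex Euclidean space X = C^d are represented as d x d complex matrices. *)

definition mtrace :: "complex mat \<Rightarrow> complex" where
  "mtrace A = (\<Sum>i<dim_row A. A $$ (i,i))"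

definition unitary_mat :: "nat \<Rightarrow> complex mat \<Rightarrow> bool" where
  "unitary_mat d U \<longleftrightarrow> U \<in> carrier_mat d d \<and> mat_adjoint U * U = 1\<^sub>m d"

definition hermitian_mat :: "nat \<Rightarrow> complex mat \<Rightarrow> bool" where
  "hermitian_mat d A \<longleftrightarrow> A \<in> carrier_mat d d \<and> mat_adjoint A = A"

definition psd_mat :: "nat \<Rightarrow> complex mat \<Rightarrow> bool" where
  "psd_mat d A \<longleftrightarrow> hermitian_mat d A \<and>
     (\<forall>v \<in> carrier_vec d. 0 \<le> Re (conjugate v \<bullet> (A *\<^sub>v v)))"

definition pd_mat :: "nat \<Rightarrow> complex mat \<Rightarrow> bool" where
  "pd_mat d A \<longleftrightarrow> hermitian_mat d A \<and>
     (\<forall>v \<in> carrier_vec d. v \<noteq> 0\<^sub>v d \<longrightarrow> 0 < Re (conjugate v \<bullet> (A *\<^sub>v v)))"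

definition mat_log :: "complex mat \<Rightarrow> complex mat" where
  "mat_log A = (SOME L. \<exists>U (f :: nat \<Rightarrow> real).
      unitary_mat (dim_row A) U \<and> (\<forall>i<dim_row A. 0 < f i) \<and>
      A = U * mat_diag (dim_row A) (\<lambda>i. complex_of_real (f i)) * mat_adjoint U \<and>
      L = U * mat_diag (dim_row A) (\<lambda>i. complex_of_real (log 2 (f i))) * mat_adjoint U)"

(* relative entropy S(P||Q) = Tr(P log P) - Tr(P log Q) (a real number for P,Q > 0) *)
definition rel_entropy :: "complex mat \<Rightarrow> complex mat \<Rightarrow> real" where
  "rel_entropy P Q = Re (mtrace (P * mat_log P) - mtrace (P * mat_log Q))"

definition linear_map_on :: "nat \<Rightarrow> (complex mat \<Rightarrow> complex mat) \<Rightarrow> bool" where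
  "linear_map_on d \<Phi> \<longleftrightarrow>
     (\<forall>A \<in> carrier_mat d d. \<Phi> A \<in> carrier_mat d d) \<and>
     (\<forall>A \<in> carrier_mat d d. \<forall>B \<in> carrier_mat d d. \<Phi> (A + B) = \<Phi> A + \<Phi> B) \<and>
     (\<forall>A \<in> carrier_mat d d. \<forall>c. \<Phi> (c \<cdot>\<^sub>m A) = c \<cdot>\<^sub>m \<Phi> A)"

(* (Phi \<otimes> id_k) acting on operators on C^d \<otimes> C^k, with basis e_a \<otimes> e_x indexed by a*k+x *)
definition tensor_id :: "nat \<Rightarrow> nat \<Rightarrow> (complex mat \<Rightarrow> complex mat) \<Rightarrow> complex mat \<Rightarrow> complex mat" where
  "tensor_id d k \<Phi> M = Matrix.mat (d*k) (d*k) (\<lambda>(i,j).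
      \<Phi> (Matrix.mat d d (\<lambda>(a,b). M $$ (a*k + i mod k, b*k + j mod k))) $$ (i div k, j div k))"

definition completely_positive :: "nat \<Rightarrow> (complex mat \<Rightarrow> complex mat) \<Rightarrow> bool" where
  "completely_positive d \<Phi> \<longleftrightarrow>
     (\<forall>k. \<forall>M. psd_mat (d*k) M \<longrightarrow> psd_mat (d*k) (tensor_id d k \<Phi> M))"

definition bistochastic :: "nat \<Rightarrow> (complex mat \<Rightarrow> complex mat) \<Rightarrow> bool" where
  "bistochastic d \<Phi> \<longleftrightarrow> linear_map_on d \<Phi> \<and> completely_positive d \<Phi> \<and>
     (\<forall>A \<in> carrier_mat d d. mtrace (\<Phi> A) = mtrace A) \<and> \<Phi> (1\<^sub>m d) = 1\<^sub>m d"

(* lam 0 \<ge> lam 1 \<ge> ... \<ge> lam (d-1) are the eigenvalues of A, counted with multiplicity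
   (0-based indexing: lam j is the paper's \<lambda>^\<down>_{j+1}) *)
definition eigenvalues_desc :: "nat \<Rightarrow> complex mat \<Rightarrow> (nat \<Rightarrow> real) \<Rightarrow> bool" where
  "eigenvalues_desc d A lam \<longleftrightarrow>
     (\<forall>i j. i \<le> j \<longrightarrow> j < d \<longrightarrow> lam j \<le> lam i) \<and>
     char_poly A = (\<Prod>i<d. [:- complex_of_real (lam i), 1:])"

end

theory Submission
  imports Defs "HOL-Computational_Algebra.Fundamental_Theorem_Algebra" "HOL-Combinatorics.List_Permutation"
begin

lemma adj_dim[simp]: "dim_row (mat_adjoint A) = dim_col A" "dim_col (mat_adjoint A) = dim_row A"
  unfolding mat_adjoint_def by (auto simp: mat_of_rows_def)

lemma adj_index[simp]: "i < dim_col A \<Longrightarrow> j < dim_row A \<Longrightarrow> mat_adjoint A $$ (i,j) = cnj (A $$ (j,i))"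
  unfolding mat_adjoint_def by (auto simp: mat_of_rows_def)

lemma adj_carrier[simp]: "A \<in> carrier_mat n m \<Longrightarrow> mat_adjoint A \<in> carrier_mat m n"
  by (metis adj_dim carrier_matD carrier_matI)

declare index_mult_mat(1)[simp del]

lemma mult_index[simp]: "i < dim_row A \<Longrightarrow> j < dim_col B \<Longrightarrow> dim_col A = dim_row B \<Longrightarrow>
  (A * B) $$ (i,j) = (\<Sum>k<dim_row B. A $$ (i,k) * B $$ (k,j))"
  by (auto simp: scalar_prod_def lessThan_atLeast0 index_mult_mat(1))

lemma carrier_mult_sq[simp]: "A \<in> carrier_mat n n \<Longrightarrow> B \<in> carrier_mat n n \<Longrightarrow> A * B \<in> carrier_mat n n"
  by auto

lemma rc_sum[simp]: "i < dim_row A \<Longrightarrow> j < dim_col B \<Longrightarrow> dim_col A = dim_row B \<Longrightarrow>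
  row A i \<bullet> col B j = (\<Sum>k<dim_row B. A $$ (i,k) * B $$ (k,j))"
  by (auto simp: scalar_prod_def lessThan_atLeast0)

lemma vec_sprod[simp]: "dim_vec w = n \<Longrightarrow> vec n f \<bullet> w = (\<Sum>k<n. f k * w $ k)"
  by (auto simp: scalar_prod_def lessThan_atLeast0)

lemma mult_entry: "A \<in> carrier_mat n m \<Longrightarrow> B \<in> carrier_mat m p \<Longrightarrow> i < n \<Longrightarrow> j < p \<Longrightarrow>
  (A * B) $$ (i,j) = (\<Sum>k<m. A $$ (i,k) * B $$ (k,j))"
  by (auto simp: scalar_prod_def lessThan_atLeast0)

lemma adj_adj[simp]: "mat_adjoint (mat_adjoint A) = (A :: complex mat)"
  by (rule eq_matI, auto)

lemma adj_mult: "(A :: complex mat) \<in> carrier_mat n m \<Longrightarrow> B \<in> carrier_mat m p \<Longrightarrow>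
  mat_adjoint (A * B) = mat_adjoint B * mat_adjoint A"
proof -
  assume A: "A \<in> carrier_mat n m" and B: "B \<in> carrier_mat m p"
  hence [simp]: "dim_row A = n" "dim_col A = m" "dim_row B = m" "dim_col B = p" by auto
  show ?thesis by (rule eq_matI, auto simp: sum_conjugate[where 'a=complex, simplified] mult.commute)
qed

lemma adj_diag: "mat_adjoint (mat_diag n (\<lambda>i. complex_of_real (f i))) = mat_diag n (\<lambda>i. complex_of_real (f i))"
  by (rule eq_matI, auto simp: mat_diag_def)

lemma unitary_dims: "unitary_mat d U \<Longrightarrow> U \<in> carrier_mat d d" unfolding unitary_mat_def by auto

lemma unitary_right: "unitary_mat d U \<Longrightarrow> U * mat_adjoint U = 1\<^sub>m d"
  unfolding unitary_mat_def by (auto intro: mat_mult_left_right_inverse)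

lemma unitary_adj: "unitary_mat d U \<Longrightarrow> unitary_mat d (mat_adjoint U)"
  using unitary_right[of d U] unfolding unitary_mat_def by auto

lemma unitary_mult: "unitary_mat d U \<Longrightarrow> unitary_mat d V \<Longrightarrow> unitary_mat d (U * V)"
proof -
  assume u: "unitary_mat d U" and v: "unitary_mat d V"
  have U: "U \<in> carrier_mat d d" and V: "V \<in> carrier_mat d d" using u v unitary_dims by auto
  have uu: "mat_adjoint U * U = 1\<^sub>m d" and vv: "mat_adjoint V * V = 1\<^sub>m d"
    using u v unfolding unitary_mat_def by auto
  have "mat_adjoint (U * V) * (U * V) = mat_adjoint V * ((mat_adjoint U * U) * V)"
    using U V by (simp add: adj_mult[OF U V] assoc_mult_mat[of _ d d _ d _ d])
  also have "\<dots> = 1\<^sub>m d" using uu vv V by simp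
  finally show ?thesis using U V unfolding unitary_mat_def by auto
qed

lemma mtrace_mult_comm: "A \<in> carrier_mat n m \<Longrightarrow> B \<in> carrier_mat m n \<Longrightarrow> mtrace (A * B) = mtrace (B * A)"
  unfolding mtrace_def
  apply (simp)
  apply (subst sum.swap) by (simp add: mult.commute)

lemma unitary_orth_rows: "unitary_mat d U \<Longrightarrow> i < d \<Longrightarrow> j < d \<Longrightarrow>
  (\<Sum>k<d. U $$ (i,k) * cnj (U $$ (j,k))) = (if i = j then 1 else 0)"
proof -
  assume u: "unitary_mat d U" and ij: "i < d" "j < d"
  have U: "U \<in> carrier_mat d d" using u unitary_dims by auto
  have "(U * mat_adjoint U) $$ (i,j) = (\<Sum>k<d. U $$ (i,k) * cnj (U $$ (j,k)))"
    using U ij by (simp add: mult_entry[of _ d d _ d])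
  thus ?thesis using unitary_right[OF u] ij by simp
qed

lemma unitary_orth_cols: "unitary_mat d U \<Longrightarrow> i < d \<Longrightarrow> j < d \<Longrightarrow>
  (\<Sum>k<d. cnj (U $$ (k,i)) * U $$ (k,j)) = (if i = j then 1 else 0)"
proof -
  assume u: "unitary_mat d U" and ij: "i < d" "j < d"
  have U: "U \<in> carrier_mat d d" using u unitary_dims by auto
  have "(mat_adjoint U * U) $$ (i,j) = (\<Sum>k<d. cnj (U $$ (k,i)) * U $$ (k,j))"
    using U ij by (simp add: mult_entry[of _ d d _ d])
  thus ?thesis using u ij unfolding unitary_mat_def by simp
qed

lemma udv_entry: "U \<in> carrier_mat n n \<Longrightarrow> V \<in> carrier_mat n n \<Longrightarrow> i < n \<Longrightarrow> j < n \<Longrightarrow>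
  (U * mat_diag n g * V) $$ (i,j) = (\<Sum>k<n. U $$ (i,k) * g k * V $$ (k,j))"
proof -
  assume U: "U \<in> carrier_mat n n" and V: "V \<in> carrier_mat n n" and ij: "i < n" "j < n"
  have "U * mat_diag n g = Matrix.mat n n (\<lambda>(i,j). U $$ (i,j) * g j)"
    using U by (rule mat_diag_mult_right)
  thus ?thesis using U V ij by (simp add: mult_entry[of _ n n _ n])
qed

lemma one_l[simp]: "dim_row A = n \<Longrightarrow> 1\<^sub>m n * A = (A :: complex mat)"
  by (rule eq_matI) (auto simp: lessThan_atLeast0 if_distrib[of "\<lambda>x. x * _"] cong: if_cong)

lemma one_r[simp]: "dim_col A = n \<Longrightarrow> A * 1\<^sub>m n = (A :: complex mat)"
  by (rule eq_matI) (auto simp: lessThan_atLeast0 if_distrib[of "\<lambda>x. _ * x"] cong: if_cong)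

lemma diag_dims[simp]: "dim_row (mat_diag n f) = n" "dim_col (mat_diag n f) = n"
  by (auto simp: mat_diag_def)

lemma diag_index[simp]: "i < n \<Longrightarrow> j < n \<Longrightarrow> mat_diag n f $$ (i,j) = (if i = j then f j else 0)"
  by (auto simp: mat_diag_def)

lemma diag_mult_l[simp]: "i < n \<Longrightarrow> j < dim_col B \<Longrightarrow> dim_row B = n \<Longrightarrow> (mat_diag n f * B) $$ (i,j) = f i * B $$ (i,j)"
  by (simp add: if_distrib[of "\<lambda>x. x * _"] cong: if_cong)

lemma diag_mult_r[simp]: "i < dim_row B \<Longrightarrow> j < n \<Longrightarrow> dim_col B = n \<Longrightarrow> (B * mat_diag n f) $$ (i,j) = B $$ (i,j) * f j"
  by (simp add: if_distrib[of "\<lambda>x. _ * x"] cong: if_cong)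

lemma cnj_sq: "z * cnj z = complex_of_real (cmod z) ^ 2"
  using complex_norm_square[of z] by simp

lemma orthonormal_first:
  assumes v: "v \<in> carrier_vec n" and v0: "v \<noteq> 0\<^sub>v n"
  shows "\<exists>U c. unitary_mat n U \<and> (\<forall>i<n. U $$ (i,0) = c * v $ i)"
proof -
  interpret cof_vec_space n "TYPE(complex)" .
  define b where "b = basis_completion v"
  define ws where "ws = gram_schmidt n b"
  define W where "W = mat_of_cols n ws"
  from basis_completion[OF v v0, folded b_def]
  have dist_b: "distinct b" 
    and indep: "\<not> lin_dep (set b)" and b: "set b \<subseteq> carrier_vec n" and hdb: "hd b = v" 
    and len_b: "length b = n" by auto
  have n: "n \<noteq> 0" using v v0 by (auto intro: eq_vecI)
  from hdb len_b n obtain vs where bv: "b = v # vs" by (cases b, auto)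
  from gram_schmidt_result[OF b dist_b indep refl, folded ws_def]
  have ws: "set ws \<subseteq> carrier_vec n" "corthogonal ws" "length ws = n" 
    by (auto simp: len_b)
  from gram_schmidt_hd[OF v, of vs, folded bv] have hdws: "hd ws = v" unfolding ws_def .
  have W: "W \<in> carrier_mat n n" using ws unfolding W_def by auto
  have Wij: "\<And>i j. i < n \<Longrightarrow> j < n \<Longrightarrow> W $$ (i,j) = ws ! j $ i"
    unfolding W_def using ws by (simp add: mat_of_cols_index)
  have ws0: "ws ! 0 = v" using hdws ws(3) n by (cases ws, auto)
  have orth: "\<And>i j. i < n \<Longrightarrow> j < n \<Longrightarrow> (\<Sum>k<n. W $$ (k,i) * cnj (W $$ (k,j))) = 0 \<longleftrightarrow> i \<noteq> j"
  proof -
    fix i j assume ij: "i < n" "j < n"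
    have "ws ! i \<in> carrier_vec n" "ws ! j \<in> carrier_vec n" using ws ij by auto
    hence "ws ! i \<bullet>c ws ! j = (\<Sum>k<n. W $$ (k,i) * cnj (W $$ (k,j)))"
      using ij by (simp add: scalar_prod_def Wij lessThan_atLeast0)
    with corthogonalD[OF ws(2), of i j] ws(3) ij show "?thesis i j" by auto
  qed
  define s where "s j = (\<Sum>k<n. (cmod (W $$ (k,j)))^2)" for j
  have s_eq: "complex_of_real (s j) = (\<Sum>k<n. W $$ (k,j) * cnj (W $$ (k,j)))" for j
    unfolding s_def of_real_sum by (rule sum.cong[OF refl], rule complex_norm_square)
  have s_pos: "s j > 0" if "j < n" for j
  proof -
    have "s j \<ge> 0" unfolding s_def by (simp add: sum_nonneg)
    moreover have "s j \<noteq> 0" using orth[OF that that] s_eq[of j] by auto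
    ultimately show ?thesis by simp
  qed
  define U where "U = Matrix.mat n n (\<lambda>(i,j). W $$ (i,j) / complex_of_real (sqrt (s j)))"
  have U: "U \<in> carrier_mat n n" unfolding U_def by auto
  have "mat_adjoint U * U = 1\<^sub>m n"
  proof (rule eq_matI)
    fix i j assume "i < dim_row (1\<^sub>m n)" "j < dim_col (1\<^sub>m n)"
    hence ij: "i < n" "j < n" by auto
    have "(mat_adjoint U * U) $$ (i,j) = (\<Sum>k<n. cnj (U $$ (k,i)) * U $$ (k,j))"
      using U ij by (simp add: mult_entry[of _ n n _ n])
    also have "\<dots> = (\<Sum>k<n. W $$ (k,j) * cnj (W $$ (k,i))) / (complex_of_real (sqrt (s i)) * complex_of_real (sqrt (s j)))"
      unfolding U_def using ij by (simp add: sum_divide_distrib field_simps)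
    also have "\<dots> = 1\<^sub>m n $$ (i,j)"
    proof (cases "i = j")
      case True
      have "sqrt (s i) * sqrt (s i) = s i" using s_pos[OF ij(1)] by simp
      hence "complex_of_real (sqrt (s i)) * complex_of_real (sqrt (s j)) = complex_of_real (s j)"
        using True by (metis of_real_mult)
      moreover have "complex_of_real (s j) \<noteq> 0" using s_pos[OF ij(2)] by simp
      ultimately show ?thesis using True s_eq[of j, symmetric] ij by simp
    next
      case False
      thus ?thesis using orth[OF ij(2) ij(1)] ij by simp
    qed
    finally show "(mat_adjoint U * U) $$ (i,j) = 1\<^sub>m n $$ (i,j)" .
  qed (use U in auto)
  hence "unitary_mat n U" using U unfolding unitary_mat_def by auto
  moreover have "\<forall>i<n. U $$ (i,0) = (1 / complex_of_real (sqrt (s 0))) * v $ i"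
    unfolding U_def using n by (simp add: Wij ws0)
  ultimately show ?thesis by blast
qed

lemma unitary_cancel:
  assumes u: "unitary_mat n U" and X: "X \<in> carrier_mat n k"
  shows "mat_adjoint U * (U * X) = X" "U * (mat_adjoint U * X) = X"
proof -
  have U: "U \<in> carrier_mat n n" using u unitary_dims by auto
  have "mat_adjoint U * (U * X) = (mat_adjoint U * U) * X"
    using U X by (simp add: assoc_mult_mat[of _ n n _ n _ k])
  thus "mat_adjoint U * (U * X) = X" using u X unfolding unitary_mat_def by auto
  have "U * (mat_adjoint U * X) = (U * mat_adjoint U) * X"
    using U X by (simp add: assoc_mult_mat[of _ n n _ n _ k])
  thus "U * (mat_adjoint U * X) = X" using unitary_right[OF u] X by auto
qed

lemma sum_lessThan_Suc_shift: "(\<Sum>k<Suc m. g k) = g 0 + (\<Sum>k<m. g (Suc k))"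
  by (rule sum.lessThan_Suc_shift)

lemma spectral:
  "A \<in> carrier_mat n n \<Longrightarrow> mat_adjoint A = A \<Longrightarrow>
   \<exists>U f. unitary_mat n U \<and> A = U * mat_diag n (\<lambda>i. complex_of_real (f i)) * mat_adjoint U"
proof (induction n arbitrary: A)
  case 0
  have "A = 1\<^sub>m 0 * mat_diag 0 (\<lambda>i. complex_of_real 0) * mat_adjoint (1\<^sub>m 0)"
    by (rule eq_matI, use 0 in auto)
  moreover have "unitary_mat 0 (1\<^sub>m 0)" unfolding unitary_mat_def by (auto intro: eq_matI)
  ultimately show ?case by (intro exI[of _ "1\<^sub>m 0"] exI[of _ "\<lambda>i. 0"]) auto
next
  case (Suc m A)
  define n where "n = Suc m"
  have A: "A \<in> carrier_mat n n" using Suc n_def by auto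
  have hA: "mat_adjoint A = A" by fact
  have "degree (char_poly A) = n" using degree_monic_char_poly[OF A] by auto
  hence "\<not> constant (poly (char_poly A))" unfolding constant_degree n_def by auto
  from fundamental_theorem_of_algebra[OF this] obtain e where "poly (char_poly A) e = 0" by auto
  hence "eigenvalue A e" using eigenvalue_root_char_poly[OF A] by auto
  then obtain v where "eigenvector A v e" unfolding eigenvalue_def by auto
  hence v: "v \<in> carrier_vec n" and v0: "v \<noteq> 0\<^sub>v n" and Av: "A *\<^sub>v v = e \<cdot>\<^sub>v v"
    unfolding eigenvector_def using A by auto
  from orthonormal_first[OF v v0] obtain W c where uW: "unitary_mat n W"
    and W0: "\<forall>i<n. W $$ (i,0) = c * v $ i" by auto
  have W: "W \<in> carrier_mat n n" using uW unitary_dims by auto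
  have n0: "0 < n" unfolding n_def by auto
  have AW0: "(A * W) $$ (i,0) = e * W $$ (i,0)" if i: "i < n" for i
  proof -
    have "(A * W) $$ (i,0) = (\<Sum>k<n. A $$ (i,k) * (c * v $ k))"
      using A W i n0 W0 by (simp add: mult_entry[of _ n n _ n])
    also have "\<dots> = c * (\<Sum>k<n. A $$ (i,k) * v $ k)"
      by (simp add: sum_distrib_left algebra_simps)
    also have "(\<Sum>k<n. A $$ (i,k) * v $ k) = (A *\<^sub>v v) $ i"
      using A v i by (simp add: scalar_prod_def lessThan_atLeast0)
    also have "\<dots> = e * v $ i" using Av v i by simp
    finally show ?thesis using W0 i by simp
  qed
  define B where "B = mat_adjoint W * (A * W)"
  have B: "B \<in> carrier_mat n n" unfolding B_def using A W by auto
  have B0: "B $$ (i,0) = (if i = 0 then e else 0)" if i: "i < n" for i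
  proof -
    have "B $$ (i,0) = (\<Sum>k<n. mat_adjoint W $$ (i,k) * (A * W) $$ (k,0))"
      unfolding B_def by (rule mult_entry) (use A W i n0 in auto)
    also have "\<dots> = (\<Sum>k<n. cnj (W $$ (k,i)) * (e * W $$ (k,0)))"
      using W i by (intro sum.cong refl) (simp add: AW0)
    also have "\<dots> = e * (\<Sum>k<n. cnj (W $$ (k,i)) * W $$ (k,0))"
      by (simp add: sum_distrib_left mult.commute mult.left_commute)
    finally show ?thesis using unitary_orth_cols[OF uW i n0] by simp
  qed
  have hB: "mat_adjoint B = B"
  proof -
    have "mat_adjoint B = mat_adjoint (A * W) * W" unfolding B_def
      using A W by (simp add: adj_mult[of _ n n _ n])
    also have "\<dots> = mat_adjoint W * A * W" using A W hA by (simp add: adj_mult[of _ n n _ n])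
    also have "\<dots> = B" unfolding B_def using A W by (simp add: assoc_mult_mat[of _ n n _ n _ n])
    finally show ?thesis .
  qed
  have Bherm: "B $$ (i,j) = cnj (B $$ (j,i))" if "i < n" "j < n" for i j
  proof -
    have "B $$ (i,j) = mat_adjoint B $$ (i,j)" using hB by simp
    thus ?thesis using B that by simp
  qed
  have B0j: "B $$ (0,j) = (if j = 0 then e else 0)" if j: "j < n" for j
    using Bherm[OF n0 j] B0[OF j] Bherm[OF n0 n0] B0[OF n0] by auto
  have ecnj: "e = cnj e" using Bherm[OF n0 n0] B0[OF n0] by simp
  have "Im e = Im (cnj e)" using ecnj by simp
  hence "Im e = 0" by simp
  hence ereal: "e = complex_of_real (Re e)" by (simp add: complex_eq_iff)
  define A' where "A' = Matrix.mat m m (\<lambda>(i,j). B $$ (Suc i, Suc j))"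
  have A': "A' \<in> carrier_mat m m" unfolding A'_def by auto
  have hA': "mat_adjoint A' = A'"
  proof (rule eq_matI)
    fix i j assume "i < dim_row A'" "j < dim_col A'"
    hence ij: "i < m" "j < m" using A' by auto
    have "mat_adjoint A' $$ (i,j) = cnj (B $$ (Suc j, Suc i))" using ij unfolding A'_def by simp
    also have "\<dots> = B $$ (Suc i, Suc j)" using Bherm[of "Suc i" "Suc j"] ij n_def by simp
    finally show "mat_adjoint A' $$ (i,j) = A' $$ (i,j)" using ij unfolding A'_def by simp
  qed (use A' in auto)
  from Suc.IH[OF A' hA'] obtain U' f' where uU': "unitary_mat m U'"
    and A'eq: "A' = U' * mat_diag m (\<lambda>i. complex_of_real (f' i)) * mat_adjoint U'" by auto
  have U': "U' \<in> carrier_mat m m" using uU' unitary_dims by auto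
  define V where "V = Matrix.mat n n (\<lambda>(i,j). if i = 0 \<and> j = 0 then 1 else if i = 0 \<or> j = 0 then 0 else U' $$ (i-1, j-1))"
  define f where "f i = (if i = 0 then Re e else f' (i - 1))" for i
  have V: "V \<in> carrier_mat n n" unfolding V_def by auto
  have uV: "unitary_mat n V"
  proof -
    have "mat_adjoint V * V = 1\<^sub>m n"
    proof (rule eq_matI)
      fix i j assume "i < dim_row (1\<^sub>m n)" "j < dim_col (1\<^sub>m n)"
      hence ij: "i < n" "j < n" by auto
      have "(mat_adjoint V * V) $$ (i,j) = (\<Sum>k<Suc m. cnj (V $$ (k,i)) * V $$ (k,j))"
        using V ij by (simp add: mult_entry[of _ n n _ n] n_def)
      also have "\<dots> = 1\<^sub>m n $$ (i,j)"
      proof (cases i)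
        case 0
        thus ?thesis using ij unfolding sum_lessThan_Suc_shift V_def n_def by auto
      next
        case (Suc i')
        show ?thesis
        proof (cases j)
          case 0
          thus ?thesis using ij Suc unfolding sum_lessThan_Suc_shift V_def n_def by auto
        next
          case (Suc j')
          have "(\<Sum>k<m. cnj (V $$ (Suc k,i)) * V $$ (Suc k,j)) = (\<Sum>k<m. cnj (U' $$ (k,i')) * U' $$ (k,j'))"
            using ij Suc \<open>i = Suc i'\<close> unfolding V_def n_def by (intro sum.cong) auto
          also have "\<dots> = (if i' = j' then 1 else 0)" using unitary_orth_cols[OF uU', of i' j'] ij Suc \<open>i = Suc i'\<close> n_def by auto
          finally show ?thesis using ij Suc \<open>i = Suc i'\<close> unfolding sum_lessThan_Suc_shift V_def n_def by auto
        qed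
      qed
      finally show "(mat_adjoint V * V) $$ (i,j) = 1\<^sub>m n $$ (i,j)" .
    qed (use V in auto)
    thus ?thesis using V unfolding unitary_mat_def by auto
  qed
  have BV: "B = V * (mat_diag n (\<lambda>i. complex_of_real (f i)) * mat_adjoint V)"
  proof (rule eq_matI)
    fix i j assume "i < dim_row (V * (mat_diag n (\<lambda>i. complex_of_real (f i)) * mat_adjoint V))"
      "j < dim_col (V * (mat_diag n (\<lambda>i. complex_of_real (f i)) * mat_adjoint V))"
    hence ij: "i < n" "j < n" using V by auto
    have "(V * (mat_diag n (\<lambda>i. complex_of_real (f i)) * mat_adjoint V)) $$ (i,j)
       = (V * mat_diag n (\<lambda>i. complex_of_real (f i)) * mat_adjoint V) $$ (i,j)"
      using V by (simp add: assoc_mult_mat[of _ n n _ n _ n])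
    also have "\<dots> = (\<Sum>k<n. V $$ (i,k) * complex_of_real (f k) * mat_adjoint V $$ (k,j))"
      by (rule udv_entry) (use V ij in auto)
    also have "\<dots> = (\<Sum>k<Suc m. V $$ (i,k) * complex_of_real (f k) * cnj (V $$ (j,k)))"
      using V ij unfolding n_def by (intro sum.cong refl) simp
    also have "\<dots> = B $$ (i,j)"
    proof (cases i)
      case 0
      thus ?thesis using ij ereal B0j unfolding sum_lessThan_Suc_shift V_def n_def f_def by auto
    next
      case (Suc i')
      show ?thesis
      proof (cases j)
        case 0
        thus ?thesis using ij Suc B0 unfolding sum_lessThan_Suc_shift V_def n_def by auto
      next
        case (Suc j')
        have "(\<Sum>k<m. V $$ (i,Suc k) * complex_of_real (f (Suc k)) * cnj (V $$ (j,Suc k)))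
          = (\<Sum>k<m. U' $$ (i',k) * complex_of_real (f' k) * cnj (U' $$ (j',k)))"
          using ij Suc \<open>i = Suc i'\<close> unfolding V_def n_def f_def by (intro sum.cong) auto
        also have "\<dots> = (\<Sum>k<m. U' $$ (i',k) * complex_of_real (f' k) * mat_adjoint U' $$ (k,j'))"
          using ij Suc \<open>i = Suc i'\<close> U' n_def by (intro sum.cong refl) simp
        also have "\<dots> = A' $$ (i',j')"
          unfolding A'eq by (rule udv_entry[symmetric]) (use ij Suc \<open>i = Suc i'\<close> U' n_def in auto)
        also have "\<dots> = B $$ (i,j)" using ij Suc \<open>i = Suc i'\<close> unfolding A'_def n_def by auto
        finally show ?thesis using ij Suc \<open>i = Suc i'\<close> unfolding sum_lessThan_Suc_shift V_def n_def by auto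
      qed
    qed
    finally show "B $$ (i,j) = (V * (mat_diag n (\<lambda>i. complex_of_real (f i)) * mat_adjoint V)) $$ (i,j)" by simp
  qed (use V B in auto)
  have AWB: "A = W * (B * mat_adjoint W)"
  proof -
    have "W * (B * mat_adjoint W) = W * (mat_adjoint W * (A * (W * mat_adjoint W)))"
      unfolding B_def using A W by (simp add: assoc_mult_mat[of _ n n _ n _ n])
    also have "\<dots> = A" using unitary_right[OF uW] A unitary_cancel(2)[OF uW A] by simp
    finally show ?thesis by simp
  qed
  have "A = (W * V) * mat_diag n (\<lambda>i. complex_of_real (f i)) * mat_adjoint (W * V)"
    unfolding AWB BV using W V by (simp add: adj_mult[of _ n n _ n] assoc_mult_mat[of _ n n _ n _ n])
  moreover have "unitary_mat n (W * V)" by (rule unitary_mult[OF uW uV])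
  ultimately show ?case unfolding n_def by blast
qed

abbreviation dg :: "nat \<Rightarrow> (nat \<Rightarrow> real) \<Rightarrow> complex mat" where
  "dg n f \<equiv> mat_diag n (\<lambda>i. complex_of_real (f i))"

lemma fc_unique:
  assumes uU: "unitary_mat n U" and uV: "unitary_mat n V"
    and eq: "U * dg n f * mat_adjoint U = V * dg n g * mat_adjoint V"
  shows "U * dg n (h \<circ> f) * mat_adjoint U = V * dg n (h \<circ> g) * mat_adjoint V"
proof -
  have U: "U \<in> carrier_mat n n" and V: "V \<in> carrier_mat n n" using uU uV unitary_dims by auto
  define Y where "Y = mat_adjoint V * U"
  have Y: "Y \<in> carrier_mat n n" unfolding Y_def using U V by auto
  have uu: "mat_adjoint U * U = 1\<^sub>m n" and vv: "mat_adjoint V * V = 1\<^sub>m n"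
    using uU uV unfolding unitary_mat_def by auto
  have uu': "U * mat_adjoint U = 1\<^sub>m n" and vv': "V * mat_adjoint V = 1\<^sub>m n"
    using uU uV by (auto simp: unitary_right)
  have e1: "Y * dg n f = mat_adjoint V * (U * dg n f * mat_adjoint U) * U"
  proof -
    have "mat_adjoint V * (U * dg n f * mat_adjoint U) * U = mat_adjoint V * (U * (dg n f * (mat_adjoint U * U)))"
      using U V by (simp add: assoc_mult_mat[of _ n n _ n _ n])
    also have "\<dots> = Y * dg n f" unfolding Y_def using U V uu by (simp add: assoc_mult_mat[of _ n n _ n _ n])
    finally show ?thesis by simp
  qed
  have e2: "dg n g * Y = mat_adjoint V * (V * dg n g * mat_adjoint V) * U"
  proof -
    have "mat_adjoint V * (V * dg n g * mat_adjoint V) * U = (mat_adjoint V * V) * (dg n g * (mat_adjoint V * U))"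
      using U V by (simp add: assoc_mult_mat[of _ n n _ n _ n])
    also have "\<dots> = dg n g * Y" unfolding Y_def using U V vv by simp
    finally show ?thesis by simp
  qed
  have comm: "dg n g * Y = Y * dg n f" using e1 e2 eq by simp
  have ent: "complex_of_real (g i) * Y $$ (i,j) = Y $$ (i,j) * complex_of_real (f j)" if ij: "i < n" "j < n" for i j
  proof -
    have "(dg n g * Y) $$ (i,j) = (Y * dg n f) $$ (i,j)" using comm by simp
    thus ?thesis using ij Y by (simp add: mat_diag_mult_left[OF Y] mat_diag_mult_right[OF Y])
  qed
  have comm2: "dg n (h \<circ> g) * Y = Y * dg n (h \<circ> f)"
  proof (rule eq_matI)
    fix i j assume "i < dim_row (Y * dg n (h \<circ> f))" "j < dim_col (Y * dg n (h \<circ> f))"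
    hence ij: "i < n" "j < n" using Y by auto
    have "complex_of_real (h (g i)) * Y $$ (i,j) = Y $$ (i,j) * complex_of_real (h (f j))"
    proof (cases "Y $$ (i,j) = 0")
      case False
      hence "g i = f j" using ent[OF ij] by (simp add: mult.commute)
      thus ?thesis by (simp add: mult.commute)
    qed simp
    thus "(dg n (h \<circ> g) * Y) $$ (i,j) = (Y * dg n (h \<circ> f)) $$ (i,j)"
      using ij Y by (simp add: mat_diag_mult_left[OF Y] mat_diag_mult_right[OF Y])
  qed (use Y in auto)
  have VY: "V * Y = U" unfolding Y_def using unitary_cancel(2)[OF uV U] by simp
  have YU: "Y * mat_adjoint U = mat_adjoint V" unfolding Y_def using U V uu'
    by (simp add: assoc_mult_mat[of _ n n _ n _ n])
  have "V * dg n (h \<circ> g) * mat_adjoint V = V * (dg n (h \<circ> g) * (Y * mat_adjoint U))"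
    using U V Y by (simp add: YU assoc_mult_mat[of _ n n _ n _ n])
  also have "\<dots> = V * ((dg n (h \<circ> g) * Y) * mat_adjoint U)"
    using U V Y by (simp add: assoc_mult_mat[of _ n n _ n _ n] del: o_apply)
  also have "\<dots> = (V * Y) * dg n (h \<circ> f) * mat_adjoint U"
    unfolding comm2 using U V Y by (simp add: assoc_mult_mat[of _ n n _ n _ n] del: o_apply)
  finally show ?thesis unfolding VY by simp
qed

lemma mat_log_eq:
  assumes uU: "unitary_mat n U" and pos: "\<forall>i<n. 0 < f i"
    and A: "A = U * dg n f * mat_adjoint U"
  shows "mat_log A = U * dg n (\<lambda>i. log 2 (f i)) * mat_adjoint U"
proof -
  have U: "U \<in> carrier_mat n n" using uU unitary_dims by auto
  have dA: "dim_row A = n" using A U by simp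
  define P where "P L = (\<exists>U (f :: nat \<Rightarrow> real).
      unitary_mat (dim_row A) U \<and> (\<forall>i<dim_row A. 0 < f i) \<and>
      A = U * mat_diag (dim_row A) (\<lambda>i. complex_of_real (f i)) * mat_adjoint U \<and>
      L = U * mat_diag (dim_row A) (\<lambda>i. complex_of_real (log 2 (f i))) * mat_adjoint U)" for L
  have ml: "mat_log A = (SOME L. P L)" unfolding mat_log_def P_def by simp
  have "P (U * dg n (\<lambda>i. log 2 (f i)) * mat_adjoint U)"
    unfolding P_def dA using uU pos A by blast
  hence "P (mat_log A)" unfolding ml by (rule someI)
  then obtain U' f' where uU': "unitary_mat n U'" and A': "A = U' * dg n f' * mat_adjoint U'"
    and L: "mat_log A = U' * dg n (\<lambda>i. log 2 (f' i)) * mat_adjoint U'"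
    unfolding P_def dA by blast
  have "U' * dg n ((log 2) \<circ> f') * mat_adjoint U' = U * dg n ((log 2) \<circ> f) * mat_adjoint U"
    by (rule fc_unique[OF uU' uU]) (use A A' in simp)
  thus ?thesis using L by (simp add: o_def)
qed

lemma mtrace_udu:
  assumes uU: "unitary_mat n U"
  shows "mtrace (U * mat_diag n a * mat_adjoint U) = (\<Sum>i<n. a i)"
proof -
  have U: "U \<in> carrier_mat n n" using uU unitary_dims by auto
  have "mtrace (U * mat_diag n a * mat_adjoint U) = mtrace (U * (mat_diag n a * mat_adjoint U))"
    using U by (simp add: assoc_mult_mat[of _ n n _ n _ n])
  also have "\<dots> = mtrace ((mat_diag n a * mat_adjoint U) * U)"
    by (rule mtrace_mult_comm[of _ n n]) (use U in auto)
  also have "\<dots> = mtrace (mat_diag n a)"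
    using U uU unfolding unitary_mat_def by (simp add: assoc_mult_mat[of _ n n _ n _ n])
  also have "\<dots> = (\<Sum>i<n. a i)" unfolding mtrace_def by (simp add: mat_diag_def)
  finally show ?thesis .
qed

lemma udu_mult:
  assumes uU: "unitary_mat n U"
  shows "(U * mat_diag n a * mat_adjoint U) * (U * mat_diag n b * mat_adjoint U) = U * mat_diag n (\<lambda>i. a i * b i) * mat_adjoint U"
proof -
  have U: "U \<in> carrier_mat n n" using uU unitary_dims by auto
  have "(U * mat_diag n a * mat_adjoint U) * (U * mat_diag n b * mat_adjoint U)
     = U * (mat_diag n a * ((mat_adjoint U * U) * (mat_diag n b * mat_adjoint U)))"
    using U by (simp add: assoc_mult_mat[of _ n n _ n _ n])
  also have "\<dots> = U * (mat_diag n a * (mat_diag n b * mat_adjoint U))"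
    using U uU unfolding unitary_mat_def by (simp add: assoc_mult_mat[of _ n n _ n _ n])
  also have "mat_diag n a * (mat_diag n b * mat_adjoint U) = mat_diag n (\<lambda>i. a i * b i) * mat_adjoint U"
    by (subst assoc_mult_mat[symmetric, of _ n n _ n _ n]) (use U in auto)
  also have "U * (mat_diag n (\<lambda>i. a i * b i) * mat_adjoint U) = U * mat_diag n (\<lambda>i. a i * b i) * mat_adjoint U"
    using U by (simp add: assoc_mult_mat[of _ n n _ n _ n])
  finally show ?thesis .
qed

lemma trace_entropy:
  assumes uU: "unitary_mat n U" and pos: "\<forall>i<n. 0 < f i"
  shows "Re (mtrace ((U * dg n f * mat_adjoint U) * mat_log (U * dg n f * mat_adjoint U)))
    = (\<Sum>i<n. f i * log 2 (f i))"
proof -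
  have "mat_log (U * dg n f * mat_adjoint U) = U * dg n (\<lambda>i. log 2 (f i)) * mat_adjoint U"
    by (rule mat_log_eq[OF uU pos refl])
  thus ?thesis using udu_mult[OF uU] mtrace_udu[OF uU] by simp
qed

lemma mtrace_diag_mult: "M \<in> carrier_mat n n \<Longrightarrow> mtrace (mat_diag n a * M) = (\<Sum>i<n. a i * M $$ (i,i))"
  unfolding mtrace_def by (intro sum.cong) (auto simp del: mult_index)

lemma trace_cross:
  assumes uX: "unitary_mat n X" and uV: "unitary_mat n V"
  shows "Re (mtrace ((X * dg n a * mat_adjoint X) * (V * dg n b * mat_adjoint V)))
    = (\<Sum>i<n. \<Sum>j<n. a i * (cmod ((mat_adjoint X * V) $$ (i,j)))^2 * b j)"
proof -
  have X: "X \<in> carrier_mat n n" and V: "V \<in> carrier_mat n n" using uX uV unitary_dims by auto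
  define Y where "Y = mat_adjoint X * V"
  have Y: "Y \<in> carrier_mat n n" unfolding Y_def using X V by auto
  have "mtrace ((X * dg n a * mat_adjoint X) * (V * dg n b * mat_adjoint V))
     = mtrace (X * (dg n a * (Y * (dg n b * mat_adjoint V))))"
    unfolding Y_def using X V by (simp add: assoc_mult_mat[of _ n n _ n _ n])
  also have "\<dots> = mtrace ((dg n a * (Y * (dg n b * mat_adjoint V))) * X)"
    by (rule mtrace_mult_comm[of _ n n]) (use X V Y in auto)
  also have "\<dots> = mtrace (dg n a * (Y * dg n b * mat_adjoint Y))"
    unfolding Y_def using X V by (simp add: assoc_mult_mat[of _ n n _ n _ n] adj_mult[of _ n n _ n])
  also have "\<dots> = (\<Sum>i<n. complex_of_real (a i) * (\<Sum>j<n. Y $$ (i,j) * complex_of_real (b j) * cnj (Y $$ (i,j))))"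
    using Y by (subst mtrace_diag_mult[of _ n]) (auto simp: udv_entry simp del: mult_index)
  also have "\<dots> = (\<Sum>i<n. \<Sum>j<n. complex_of_real (a i * (cmod (Y $$ (i,j)))^2 * b j))"
    by (intro sum.cong refl) (simp add: sum_distrib_left cnj_sq algebra_simps)
  finally show ?thesis unfolding Y_def by (simp add: Re_sum)
qed

lemma lin_prod_mset:
  fixes A B :: "complex multiset"
  shows "prod_mset (image_mset (\<lambda>a. [:-a,1:]) A) = prod_mset (image_mset (\<lambda>a. [:-a,1:]) B) \<Longrightarrow> A = B"
proof (induction A arbitrary: B)
  case empty
  show ?case
  proof (rule ccontr)
    assume "{#} \<noteq> B"
    then obtain b where b: "b \<in># B" by (metis multiset_nonemptyE)
    have "poly (prod_mset (image_mset (\<lambda>a. [:-a,1:]) B)) b = 0"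
      using b by (auto simp: poly_prod_mset prod_mset_zero_iff)
    thus False using empty by simp
  qed
next
  case (add a A)
  have "poly (prod_mset (image_mset (\<lambda>a. [:-a,1:]) B)) a = 0"
    using add.prems[symmetric] by (simp add: poly_prod_mset)
  hence aB: "a \<in># B" by (auto simp: poly_prod_mset prod_mset_zero_iff)
  define B' where "B' = B - {#a#}"
  have B: "B = add_mset a B'" unfolding B'_def using aB by simp
  have "[:-a,1:] * prod_mset (image_mset (\<lambda>a. [:-a,1:]) A) = [:-a,1:] * prod_mset (image_mset (\<lambda>a. [:-a,1:]) B')"
    using add.prems unfolding B by simp
  hence "prod_mset (image_mset (\<lambda>a. [:-a,1:]) A) = prod_mset (image_mset (\<lambda>a. [:-a,1:]) B')"
    by (subst (asm) mult_left_cancel) auto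
  from add.IH[OF this] show ?case unfolding B by simp
qed

lemma prod_list_upt_map: "(\<Prod>a\<leftarrow>map g [0..<d]. h a) = (\<Prod>i<d. (h (g i) :: 'b :: comm_monoid_mult))"
  by (induction d) (auto simp: lessThan_Suc mult.commute)

lemma eig_perm:
  assumes uU: "unitary_mat d U" and A: "A = U * dg d f * mat_adjoint U"
    and cp: "char_poly A = (\<Prod>i<d. [:- complex_of_real (lam i), 1:])"
  shows "\<exists>p. bij_betw p {..<d} {..<d} \<and> (\<forall>i<d. f i = lam (p i))"
proof -
  have U: "U \<in> carrier_mat d d" using uU unitary_dims by auto
  have "similar_mat A (dg d f)"
    unfolding similar_mat_def similar_mat_wit_def Let_def
    using U A uU unitary_right[OF uU] unfolding unitary_mat_def
    by (intro exI[of _ U] exI[of _ "mat_adjoint U"]) auto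
  hence "char_poly A = char_poly (dg d f)" by (rule char_poly_similar)
  also have "\<dots> = (\<Prod>a\<leftarrow>diag_mat (dg d f). [:- a, 1:])"
    by (rule char_poly_upper_triangular[of _ d]) (auto simp: upper_triangular_def)
  also have "diag_mat (dg d f) = map (\<lambda>i. complex_of_real (f i)) [0..<d]"
    by (auto simp: diag_mat_def intro: nth_equalityI)
  finally have "(\<Prod>a\<leftarrow>map (\<lambda>i. complex_of_real (f i)) [0..<d]. [:- a, 1:])
      = (\<Prod>a\<leftarrow>map (\<lambda>i. complex_of_real (lam i)) [0..<d]. [:- a, 1:])"
    using cp by (simp only: prod_list_upt_map)
  hence "mset (map (\<lambda>i. complex_of_real (f i)) [0..<d]) = mset (map (\<lambda>i. complex_of_real (lam i)) [0..<d])"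
    by (intro lin_prod_mset) (simp add: prod_mset_prod_list[symmetric] multiset.map_comp)
  from permutation_Ex_bij[OF this] obtain p where bp: "bij_betw p {..<d} {..<d}"
    and eq: "\<forall>i<d. map (\<lambda>i. complex_of_real (f i)) [0..<d] ! i = map (\<lambda>i. complex_of_real (lam i)) [0..<d] ! p i"
    by auto
  have "\<forall>i<d. p i < d" using bp bij_betwE by blast
  hence "\<forall>i<d. f i = lam (p i)" using eq by simp
  thus ?thesis using bp by auto
qed

lemma gibbs_pt:
  assumes x: "0 < (x::real)" and m: "0 < m"
  shows "(x - m) / ln 2 \<le> x * log 2 x - x * log 2 m"
proof -
  have "ln (m / x) \<le> m / x - 1" using x m by (intro ln_le_minus_one) auto
  hence "x * ln (m / x) \<le> x * (m / x - 1)" using x by (intro mult_left_mono) auto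
  moreover have "x * (m / x - 1) = m - x" using x by (simp add: field_simps)
  ultimately have "x * ln (m / x) \<le> m - x" by simp
  moreover have "ln (m / x) = ln m - ln x" using x m by (simp add: ln_div)
  ultimately have "x - m \<le> x * ln x - x * ln m" by (simp add: algebra_simps)
  hence "(x - m) / ln 2 \<le> (x * ln x - x * ln m) / ln 2" by (intro divide_right_mono) auto
  thus ?thesis by (simp add: log_def diff_divide_distrib)
qed

lemma row_jensen:
  fixes w x :: "'i \<Rightarrow> real"
  assumes K: "finite K" and w: "\<forall>k\<in>K. 0 \<le> w k" and sw: "(\<Sum>k\<in>K. w k) = 1"
    and x: "\<forall>k\<in>K. 0 < x k"
  shows "0 < (\<Sum>k\<in>K. w k * x k)"
    and "(\<Sum>k\<in>K. w k * x k) * log 2 (\<Sum>k\<in>K. w k * x k) \<le> (\<Sum>k\<in>K. w k * (x k * log 2 (x k)))"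
proof -
  obtain k0 where k0: "k0 \<in> K" "w k0 \<noteq> 0"
    using sw by (metis (mono_tags, lifting) sum.neutral zero_neq_one)
  show mpos: "0 < (\<Sum>k\<in>K. w k * x k)"
    by (rule sum_pos2[OF K k0(1)]) (use w x k0 in \<open>auto intro: mult_pos_pos mult_nonneg_nonneg less_imp_le simp: order_le_less\<close>)
  define m where "m = (\<Sum>k\<in>K. w k * x k)"
  have m: "0 < m" using mpos unfolding m_def .
  have "(\<Sum>k\<in>K. w k * ((x k - m) / ln 2)) \<le> (\<Sum>k\<in>K. w k * (x k * log 2 (x k) - x k * log 2 m))"
    by (intro sum_mono mult_left_mono gibbs_pt) (use w x m in auto)
  moreover have "(\<Sum>k\<in>K. w k * ((x k - m) / ln 2)) = ((\<Sum>k\<in>K. w k * x k) - m * (\<Sum>k\<in>K. w k)) / ln 2"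
    by (simp add: sum_divide_distrib[symmetric] sum_subtractf sum_distrib_left algebra_simps)
  moreover have "(\<Sum>k\<in>K. w k * (x k * log 2 (x k) - x k * log 2 m)) = (\<Sum>k\<in>K. w k * (x k * log 2 (x k))) - (\<Sum>k\<in>K. w k * x k) * log 2 m"
    by (simp add: sum_subtractf sum_distrib_right sum_distrib_left algebra_simps)
  ultimately show "(\<Sum>k\<in>K. w k * x k) * log 2 (\<Sum>k\<in>K. w k * x k) \<le> (\<Sum>k\<in>K. w k * (x k * log 2 (x k)))"
    using sw m_def by simp
qed

lemma abel_neg:
  fixes a z :: "nat \<Rightarrow> real"
  assumes "\<forall>i j. i \<le> j \<longrightarrow> j < n \<longrightarrow> a j \<le> a i" and "\<forall>k<n. 0 \<le> a k"
    and "\<forall>s<n. (\<Sum>k<Suc s. z k) \<le> 0"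
  shows "(\<Sum>k<n. a k * z k) \<le> 0"
  using assms
proof (induction n arbitrary: a)
  case 0 thus ?case by simp
next
  case (Suc n a)
  define a' where "a' k = a k - a n" for k
  have "(\<Sum>k<n. a' k * z k) \<le> 0"
    by (rule Suc.IH) (use Suc.prems in \<open>auto simp: a'_def\<close>)
  moreover have "a n * (\<Sum>k<Suc n. z k) \<le> 0"
    using Suc.prems by (intro mult_nonneg_nonpos) auto
  moreover have "(\<Sum>k<Suc n. a k * z k) = (\<Sum>k<n. a' k * z k) + a n * (\<Sum>k<Suc n. z k)"
    unfolding a'_def by (simp add: sum_distrib_left sum_subtractf algebra_simps)
  ultimately show ?case by simp
qed

lemma sum_if_le: "s < n \<Longrightarrow> (\<Sum>j<n. (if j \<le> s then f j else 0)) = (\<Sum>j<Suc s. f j)"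
proof -
  assume s: "s < n"
  have "(\<Sum>j<n. (if j \<le> s then f j else 0)) = (\<Sum>j\<in>{j\<in>{..<n}. j \<le> s}. f j)"
    by (rule sum.inter_filter[symmetric]) simp
  also have "{j\<in>{..<n}. j \<le> s} = {..<Suc s}" using s by auto
  finally show ?thesis .
qed

lemma knapsack:
  fixes b w :: "nat \<Rightarrow> real"
  assumes dec: "\<forall>i j. i \<le> j \<longrightarrow> j < n \<longrightarrow> b j \<le> b i" and s: "s < n"
    and w: "\<forall>j<n. 0 \<le> w j \<and> w j \<le> 1" and sw: "(\<Sum>j<n. w j) = real (Suc s)"
  shows "(\<Sum>j<n. w j * b j) \<le> (\<Sum>j<Suc s. b j)"
proof -
  define e where "e j = (if j \<le> s then (1::real) else 0)" for j
  have se: "(\<Sum>j<n. e j) = real (Suc s)"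
    using sum_if_le[OF s, of "\<lambda>_. 1::real"] unfolding e_def by simp
  have sb: "(\<Sum>j<Suc s. b j) = (\<Sum>j<n. e j * b j)"
    using sum_if_le[OF s, of b] unfolding e_def by (simp add: if_distrib[of "\<lambda>x. x * _"] cong: if_cong)
  have "(\<Sum>j<n. (w j - e j) * b j) \<le> (\<Sum>j<n. (w j - e j) * b s)"
  proof (rule sum_mono)
    fix j assume j: "j \<in> {..<n}"
    show "(w j - e j) * b j \<le> (w j - e j) * b s"
    proof (cases "j \<le> s")
      case True
      hence "b s \<le> b j" using dec s by auto
      thus ?thesis using True w j unfolding e_def by (auto intro: mult_left_mono_neg)
    next
      case False
      hence "b j \<le> b s" using dec j by auto
      thus ?thesis using False w j unfolding e_def by (auto intro: mult_left_mono)
    qed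
  qed
  also have "\<dots> = 0" using sw se by (simp add: sum_distrib_right[symmetric] sum_subtractf)
  finally show ?thesis unfolding sb by (simp add: algebra_simps sum_subtractf)
qed

lemma rearrangement:
  fixes a b :: "nat \<Rightarrow> real" and M :: "nat \<Rightarrow> nat \<Rightarrow> real"
  assumes da: "\<forall>i j. i \<le> j \<longrightarrow> j < n \<longrightarrow> a j \<le> a i"
    and db: "\<forall>i j. i \<le> j \<longrightarrow> j < n \<longrightarrow> b j \<le> b i"
    and M: "\<forall>k<n. \<forall>j<n. 0 \<le> M k j"
    and rows: "\<forall>k<n. (\<Sum>j<n. M k j) = 1" and cols: "\<forall>j<n. (\<Sum>k<n. M k j) = 1"
  shows "(\<Sum>k<n. \<Sum>j<n. a k * M k j * b j) \<le> (\<Sum>k<n. a k * b k)"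
proof (cases n)
  case 0 thus ?thesis by simp
next
  case (Suc n1)
  define z where "z k = (\<Sum>j<n. M k j * b j) - b k" for k
  have Z: "(\<Sum>k<Suc s. z k) \<le> 0" if s: "s < n" for s
  proof -
    define w where "w j = (\<Sum>k<Suc s. M k j)" for j
    have w: "\<forall>j<n. 0 \<le> w j \<and> w j \<le> 1"
    proof (intro allI impI conjI)
      fix j assume j: "j < n"
      show "0 \<le> w j" unfolding w_def using M j s by (intro sum_nonneg) auto
      have "w j \<le> (\<Sum>k<n. M k j)" unfolding w_def using M j s
        by (intro sum_mono2) auto
      thus "w j \<le> 1" using cols j by simp
    qed
    have sw: "(\<Sum>j<n. w j) = real (Suc s)"
      unfolding w_def using rows s by (subst sum.swap) simp
    have "(\<Sum>k<Suc s. \<Sum>j<n. M k j * b j) = (\<Sum>j<n. w j * b j)"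
      unfolding w_def sum_distrib_right by (rule sum.swap)
    hence "(\<Sum>k<Suc s. z k) = (\<Sum>j<n. w j * b j) - (\<Sum>j<Suc s. b j)"
      unfolding z_def by (simp add: sum_subtractf)
    thus ?thesis using knapsack[OF db s w sw] by simp
  qed
  define a' where "a' k = a k - a n1" for k
  have "(\<Sum>k<n. \<Sum>j<n. M k j * b j) = (\<Sum>j<n. (\<Sum>k<n. M k j) * b j)"
    unfolding sum_distrib_right by (rule sum.swap)
  also have "\<dots> = (\<Sum>j<n. b j)" using cols by simp
  finally have zn: "(\<Sum>k<n. z k) = 0"
    unfolding z_def by (simp add: sum_subtractf)
  have "(\<Sum>k<n. a' k * z k) \<le> 0"
    by (rule abel_neg) (use da Suc Z in \<open>auto simp: a'_def\<close>)
  moreover have "(\<Sum>k<n. a k * z k) = (\<Sum>k<n. a' k * z k) + a n1 * (\<Sum>k<n. z k)"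
    unfolding a'_def by (simp add: sum_distrib_left sum_subtractf algebra_simps)
  moreover have "(\<Sum>k<n. a k * z k) = (\<Sum>k<n. \<Sum>j<n. a k * M k j * b j) - (\<Sum>k<n. a k * b k)"
    unfolding z_def by (simp add: sum_distrib_left sum_subtractf algebra_simps)
  ultimately show ?thesis using zn by simp
qed

primrec msum :: "nat \<Rightarrow> nat \<Rightarrow> (nat \<Rightarrow> complex mat) \<Rightarrow> complex mat" where
  "msum n 0 F = 0\<^sub>m n n"
| "msum n (Suc k) F = msum n k F + F k"

lemma msum_carrier: "\<forall>l<k. F l \<in> carrier_mat n n \<Longrightarrow> msum n k F \<in> carrier_mat n n"
  by (induction k) auto

lemma msum_index: "\<forall>l<k. F l \<in> carrier_mat n n \<Longrightarrow> i < n \<Longrightarrow> j < n \<Longrightarrow>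
  msum n k F $$ (i,j) = (\<Sum>l<k. F l $$ (i,j))"
proof (induction k)
  case (Suc k)
  have "msum n k F \<in> carrier_mat n n" using Suc.prems by (intro msum_carrier) auto
  moreover have "F k \<in> carrier_mat n n" using Suc.prems by auto
  ultimately have "dim_row (msum n k F) = n" "dim_col (msum n k F) = n" "dim_row (F k) = n" "dim_col (F k) = n" by auto
  thus ?case using Suc by simp
qed simp

lemma lin_zero: "linear_map_on d \<Phi> \<Longrightarrow> \<Phi> (0\<^sub>m d d) = 0\<^sub>m d d"
proof -
  assume l: "linear_map_on d \<Phi>"
  have c: "0\<^sub>m d d \<in> carrier_mat d d" by simp
  have "\<Phi> (0\<^sub>m d d) = \<Phi> (0 \<cdot>\<^sub>m 0\<^sub>m d d)" by simp
  also have "\<dots> = 0 \<cdot>\<^sub>m \<Phi> (0\<^sub>m d d)" using l c unfolding linear_map_on_def by blast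
  also have "\<Phi> (0\<^sub>m d d) \<in> carrier_mat d d" using l c unfolding linear_map_on_def by blast
  hence "0 \<cdot>\<^sub>m \<Phi> (0\<^sub>m d d) = 0\<^sub>m d d" by (intro eq_matI) auto
  finally show ?thesis .
qed

lemma lin_msum: "linear_map_on d \<Phi> \<Longrightarrow> \<forall>l<k. F l \<in> carrier_mat d d \<Longrightarrow>
  \<Phi> (msum d k F) = msum d k (\<lambda>l. \<Phi> (F l))"
proof (induction k)
  case 0 thus ?case by (simp add: lin_zero)
next
  case (Suc k)
  have "msum d k F \<in> carrier_mat d d" using Suc.prems by (intro msum_carrier) auto
  thus ?case using Suc unfolding linear_map_on_def by simp
qed

lemma tensor_id_1: assumes "M \<in> carrier_mat d d" and "linear_map_on d \<Phi>"
  shows "tensor_id d 1 \<Phi> M = \<Phi> M"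
proof -
  have inner: "Matrix.mat d d (\<lambda>(a,b). M $$ (a*1 + i mod 1, b*1 + j mod 1)) = M" for i j
    using assms(1) by (intro eq_matI) auto
  have "\<Phi> M \<in> carrier_mat d d" using assms unfolding linear_map_on_def by auto
  thus ?thesis unfolding tensor_id_def inner by (intro eq_matI) auto
qed

lemma cp_psd: assumes "bistochastic d \<Phi>" "psd_mat d M" shows "psd_mat d (\<Phi> M)"
proof -
  have M: "M \<in> carrier_mat d d" using assms(2) unfolding psd_mat_def hermitian_mat_def by auto
  have l: "linear_map_on d \<Phi>" using assms(1) unfolding bistochastic_def by auto
  have cp: "\<forall>k M. psd_mat (d*k) M \<longrightarrow> psd_mat (d*k) (tensor_id d k \<Phi> M)"
    using assms(1) unfolding bistochastic_def completely_positive_def by auto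
  have "psd_mat (d*1) M" using assms(2) by simp
  hence "psd_mat (d*1) (tensor_id d 1 \<Phi> M)" using cp by blast
  thus ?thesis using tensor_id_1[OF M l] by simp
qed

lemma quad_form: "B \<in> carrier_mat d d \<Longrightarrow> v \<in> carrier_vec d \<Longrightarrow>
  conjugate v \<bullet> (B *\<^sub>v v) = (\<Sum>a<d. \<Sum>b<d. cnj (v $ a) * B $$ (a,b) * v $ b)"
proof -
  assume B: "B \<in> carrier_mat d d" and v: "v \<in> carrier_vec d"
  have "conjugate v \<bullet> (B *\<^sub>v v) = (\<Sum>a<d. conjugate v $ a * (B *\<^sub>v v) $ a)"
    using B by (simp add: scalar_prod_def lessThan_atLeast0)
  also have "\<dots> = (\<Sum>a<d. cnj (v $ a) * (\<Sum>b<d. B $$ (a,b) * v $ b))"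
    using B v by (intro sum.cong refl) (simp add: scalar_prod_def lessThan_atLeast0 conjugate_vec_def)
  also have "\<dots> = (\<Sum>a<d. \<Sum>b<d. cnj (v $ a) * B $$ (a,b) * v $ b)"
    by (simp only: sum_distrib_left mult.assoc)
  finally show ?thesis .
qed

lemma quad_entry: "X \<in> carrier_mat d d \<Longrightarrow> B \<in> carrier_mat d d \<Longrightarrow> i < d \<Longrightarrow>
  (mat_adjoint X * B * X) $$ (i,i) = (\<Sum>a<d. \<Sum>b<d. cnj (X $$ (a,i)) * B $$ (a,b) * X $$ (b,i))"
proof -
  assume X: "X \<in> carrier_mat d d" and B: "B \<in> carrier_mat d d" and i: "i < d"
  have "(mat_adjoint X * B * X) $$ (i,i) = (\<Sum>b<d. (\<Sum>a<d. cnj (X $$ (a,i)) * B $$ (a,b)) * X $$ (b,i))"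
    using X B i by simp
  also have "\<dots> = (\<Sum>b<d. \<Sum>a<d. cnj (X $$ (a,i)) * B $$ (a,b) * X $$ (b,i))"
    by (simp only: sum_distrib_right)
  also have "\<dots> = (\<Sum>a<d. \<Sum>b<d. cnj (X $$ (a,i)) * B $$ (a,b) * X $$ (b,i))"
    by (rule sum.swap)
  finally show ?thesis .
qed

lemma quad_entry_col: "(X :: complex mat) \<in> carrier_mat d d \<Longrightarrow> B \<in> carrier_mat d d \<Longrightarrow> i < d \<Longrightarrow>
  (mat_adjoint X * B * X) $$ (i,i) = conjugate (col X i) \<bullet> (B *\<^sub>v col X i)"
proof -
  assume X: "X \<in> carrier_mat d d" and B: "B \<in> carrier_mat d d" and i: "i < d"
  have c: "col X i \<in> carrier_vec d" using X by auto
  show ?thesis unfolding quad_form[OF B c] quad_entry[OF X B i]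
    using X i by (intro sum.cong refl) simp
qed

lemma msum_cong: "(\<forall>l<k. F l = G l) \<Longrightarrow> msum n k F = msum n k G"
  by (induction k) auto

lemma quad_msum:
  assumes X: "X \<in> carrier_mat d d" and F: "\<forall>l<K. F l \<in> carrier_mat d d" and i: "i < d"
  shows "(mat_adjoint X * msum d K F * X) $$ (i,i) = (\<Sum>k<K. (mat_adjoint X * F k * X) $$ (i,i))"
proof -
  have "(mat_adjoint X * msum d K F * X) $$ (i,i) = (\<Sum>a<d. \<Sum>b<d. cnj (X $$ (a,i)) * msum d K F $$ (a,b) * X $$ (b,i))"
    by (rule quad_entry[OF X msum_carrier[OF F] i])
  also have "\<dots> = (\<Sum>a<d. \<Sum>b<d. \<Sum>k<K. cnj (X $$ (a,i)) * F k $$ (a,b) * X $$ (b,i))"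
    using F by (intro sum.cong refl) (simp add: msum_index sum_distrib_left sum_distrib_right)
  also have "\<dots> = (\<Sum>k<K. \<Sum>a<d. \<Sum>b<d. cnj (X $$ (a,i)) * F k $$ (a,b) * X $$ (b,i))"
    by (simp add: sum.swap[of _ "{..<K}"])
  also have "\<dots> = (\<Sum>k<K. (mat_adjoint X * F k * X) $$ (i,i))"
    using F by (intro sum.cong refl quad_entry[symmetric, OF X _ i]) auto
  finally show ?thesis .
qed

lemma quad_smult:
  assumes X: "X \<in> carrier_mat d d" and B: "B \<in> carrier_mat d d" and i: "i < d"
  shows "(mat_adjoint X * (c \<cdot>\<^sub>m B) * X) $$ (i,i) = c * (mat_adjoint X * B * X) $$ (i,i)"
  using X B i by (simp add: quad_entry sum_distrib_left algebra_simps)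

locale chan_setup =
  fixes d :: nat and \<Phi> :: "complex mat \<Rightarrow> complex mat" and W :: "complex mat" and l :: "nat \<Rightarrow> real"
  assumes bs: "bistochastic d \<Phi>" and uW: "unitary_mat d W"
begin

definition P :: "nat \<Rightarrow> complex mat" where
  "P k = Matrix.mat d d (\<lambda>(i,j). W $$ (i,k) * cnj (W $$ (j,k)))"

lemma W: "W \<in> carrier_mat d d" using uW unitary_dims by auto

lemma lin: "linear_map_on d \<Phi>" using bs unfolding bistochastic_def by auto

lemma Phi_carrier: "A \<in> carrier_mat d d \<Longrightarrow> \<Phi> A \<in> carrier_mat d d"
  using lin unfolding linear_map_on_def by auto

lemma P_carrier[simp]: "P k \<in> carrier_mat d d" unfolding P_def by auto

lemma P_psd: "psd_mat d (P k)"
  unfolding psd_mat_def hermitian_mat_def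
proof (intro conjI ballI)
  show "P k \<in> carrier_mat d d" by simp
  show "mat_adjoint (P k) = P k" by (rule eq_matI) (auto simp: P_def)
  fix v :: "complex vec" assume v: "v \<in> carrier_vec d"
  define z where "z = (\<Sum>a<d. cnj (v $ a) * W $$ (a,k))"
  have "conjugate v \<bullet> (P k *\<^sub>v v) = (\<Sum>a<d. \<Sum>b<d. cnj (v $ a) * P k $$ (a,b) * v $ b)"
    by (rule quad_form[OF P_carrier v])
  also have "\<dots> = (\<Sum>a<d. \<Sum>b<d. (cnj (v $ a) * W $$ (a,k)) * (cnj (W $$ (b,k)) * v $ b))"
    by (intro sum.cong refl) (simp add: P_def algebra_simps)
  also have "\<dots> = z * cnj z"
  proof -
    have cz: "cnj z = (\<Sum>b<d. cnj (W $$ (b,k)) * v $ b)" unfolding z_def by (simp add: cnj_sum mult.commute)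
    show ?thesis unfolding cz unfolding z_def by (simp add: sum_product)
  qed
  also have "\<dots> = complex_of_real (cmod z ^ 2)" by (simp add: cnj_sq)
  finally show "0 \<le> Re (conjugate v \<bullet> (P k *\<^sub>v v))" by simp
qed

lemma rho_msum: "W * dg d l * mat_adjoint W = msum d d (\<lambda>k. complex_of_real (l k) \<cdot>\<^sub>m P k)"
proof (rule eq_matI)
  fix i j assume "i < dim_row (msum d d (\<lambda>k. complex_of_real (l k) \<cdot>\<^sub>m P k))"
    "j < dim_col (msum d d (\<lambda>k. complex_of_real (l k) \<cdot>\<^sub>m P k))"
  hence ij: "i < d" "j < d" using msum_carrier[of d "\<lambda>k. complex_of_real (l k) \<cdot>\<^sub>m P k" d] by auto
  have "(W * dg d l * mat_adjoint W) $$ (i,j) = (\<Sum>k<d. W $$ (i,k) * complex_of_real (l k) * mat_adjoint W $$ (k,j))"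
    by (rule udv_entry) (use W ij in auto)
  thus "(W * dg d l * mat_adjoint W) $$ (i,j) = msum d d (\<lambda>k. complex_of_real (l k) \<cdot>\<^sub>m P k) $$ (i,j)"
    using ij W by (simp add: msum_index P_def algebra_simps)
qed (use W msum_carrier[of d "\<lambda>k. complex_of_real (l k) \<cdot>\<^sub>m P k" d] in auto)

lemma one_msum: "1\<^sub>m d = msum d d P"
proof (rule eq_matI)
  fix i j assume "i < dim_row (msum d d P)" "j < dim_col (msum d d P)"
  hence ij: "i < d" "j < d" using msum_carrier[of d P d] by auto
  show "1\<^sub>m d $$ (i,j) = msum d d P $$ (i,j)"
    using ij W unitary_orth_rows[OF uW ij] by (simp add: msum_index P_def)
qed (use msum_carrier[of d P d] in auto)

lemma trace_P: "k < d \<Longrightarrow> mtrace (P k) = 1"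
  using unitary_orth_cols[OF uW, of k k] unfolding mtrace_def P_def by (simp add: mult.commute)

lemma Phi_rho: "\<Phi> (W * dg d l * mat_adjoint W) = msum d d (\<lambda>k. complex_of_real (l k) \<cdot>\<^sub>m \<Phi> (P k))"
proof -
  have "\<Phi> (W * dg d l * mat_adjoint W) = msum d d (\<lambda>k. \<Phi> (complex_of_real (l k) \<cdot>\<^sub>m P k))"
    unfolding rho_msum by (rule lin_msum[OF lin]) auto
  also have "\<dots> = msum d d (\<lambda>k. complex_of_real (l k) \<cdot>\<^sub>m \<Phi> (P k))"
    using lin unfolding linear_map_on_def by (intro msum_cong) auto
  finally show ?thesis .
qed

context
  fixes X :: "complex mat"
  assumes uX: "unitary_mat d X"
begin

lemma X: "X \<in> carrier_mat d d" using uX unitary_dims by auto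

definition D :: "nat \<Rightarrow> nat \<Rightarrow> real" where
  "D i k = Re ((mat_adjoint X * \<Phi> (P k) * X) $$ (i,i))"

lemma D_nonneg: "i < d \<Longrightarrow> 0 \<le> D i k"
proof -
  assume i: "i < d"
  have "psd_mat d (\<Phi> (P k))" by (rule cp_psd[OF bs P_psd])
  moreover have "col X i \<in> carrier_vec d" using X by auto
  ultimately have "0 \<le> Re (conjugate (col X i) \<bullet> (\<Phi> (P k) *\<^sub>v col X i))"
    unfolding psd_mat_def by auto
  thus ?thesis unfolding D_def using quad_entry_col[OF X Phi_carrier[OF P_carrier] i] by simp
qed

lemma D_rows: "i < d \<Longrightarrow> (\<Sum>k<d. D i k) = 1"
proof -
  assume i: "i < d"
  have "(\<Sum>k<d. (mat_adjoint X * \<Phi> (P k) * X) $$ (i,i)) = (mat_adjoint X * msum d d (\<lambda>k. \<Phi> (P k)) * X) $$ (i,i)"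
    by (rule quad_msum[symmetric, OF X _ i]) (auto intro: Phi_carrier)
  also have "msum d d (\<lambda>k. \<Phi> (P k)) = \<Phi> (1\<^sub>m d)"
    unfolding one_msum by (rule lin_msum[OF lin, symmetric]) auto
  also have "\<dots> = 1\<^sub>m d" using bs unfolding bistochastic_def by auto
  also have "(mat_adjoint X * 1\<^sub>m d * X) $$ (i,i) = 1"
    using uX X i unfolding unitary_mat_def by simp
  finally show ?thesis unfolding D_def by (simp only: Re_sum[symmetric]) simp
qed

lemma D_cols: "k < d \<Longrightarrow> (\<Sum>i<d. D i k) = 1"
proof -
  assume k: "k < d"
  have Pk: "\<Phi> (P k) \<in> carrier_mat d d" by (rule Phi_carrier) simp
  have "mtrace (mat_adjoint X * \<Phi> (P k) * X) = mtrace (X * (mat_adjoint X * \<Phi> (P k)))"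
    by (rule mtrace_mult_comm[of _ d d]) (use X Pk in auto)
  also have "X * (mat_adjoint X * \<Phi> (P k)) = \<Phi> (P k)" by (rule unitary_cancel(2)[OF uX Pk])
  also have "mtrace (\<Phi> (P k)) = mtrace (P k)" using bs unfolding bistochastic_def by auto
  also have "\<dots> = 1" by (rule trace_P[OF k])
  finally have "mtrace (mat_adjoint X * \<Phi> (P k) * X) = 1" .
  moreover have dr: "dim_row (mat_adjoint X * \<Phi> (P k) * X) = d" using X by simp
  ultimately have "(\<Sum>i<d. (mat_adjoint X * \<Phi> (P k) * X) $$ (i,i)) = 1"
    unfolding mtrace_def dr by simp
  thus ?thesis unfolding D_def by (simp only: Re_sum[symmetric]) simp
qed

lemma nu_eq:
  assumes eq: "\<Phi> (W * dg d l * mat_adjoint W) = X * dg d \<nu> * mat_adjoint X" and i: "i < d"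
  shows "\<nu> i = (\<Sum>k<d. D i k * l k)"
proof -
  have "(mat_adjoint X * (X * dg d \<nu> * mat_adjoint X) * X) = dg d \<nu>"
  proof -
    have "mat_adjoint X * (X * dg d \<nu> * mat_adjoint X) * X = (mat_adjoint X * X) * dg d \<nu> * (mat_adjoint X * X)"
      using X by (simp add: assoc_mult_mat[of _ d d _ d _ d])
    thus ?thesis using uX unfolding unitary_mat_def by simp
  qed
  hence "complex_of_real (\<nu> i) = (mat_adjoint X * \<Phi> (W * dg d l * mat_adjoint W) * X) $$ (i,i)"
    using i eq by simp
  also have "\<dots> = (\<Sum>k<d. (mat_adjoint X * (complex_of_real (l k) \<cdot>\<^sub>m \<Phi> (P k)) * X) $$ (i,i))"
    unfolding Phi_rho by (rule quad_msum[OF X _ i]) (auto intro!: smult_carrier_mat Phi_carrier)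
  also have "\<dots> = (\<Sum>k<d. complex_of_real (l k) * (mat_adjoint X * \<Phi> (P k) * X) $$ (i,i))"
    by (intro sum.cong refl quad_smult[OF X _ i] Phi_carrier) simp
  finally have "\<nu> i = Re (\<Sum>k<d. complex_of_real (l k) * (mat_adjoint X * \<Phi> (P k) * X) $$ (i,i))"
    by (metis Re_complex_of_real)
  thus ?thesis unfolding D_def by (simp add: Re_sum mult.commute)
qed

end
end

lemma reindex_inv:
  assumes "bij_betw f {..<n} {..<n}"
  shows "(\<Sum>j<n. h j) = (\<Sum>q<n. h (inv_into {..<n} f q))"
  using sum.reindex_bij_betw[OF bij_betw_inv_into[OF assms], of h] by simp

lemma rearr_perm:
  fixes a b :: "nat \<Rightarrow> real" and M :: "nat \<Rightarrow> nat \<Rightarrow> real"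
  assumes da: "\<forall>i j. i \<le> j \<longrightarrow> j < n \<longrightarrow> a j \<le> a i"
    and db: "\<forall>i j. i \<le> j \<longrightarrow> j < n \<longrightarrow> b j \<le> b i"
    and al: "bij_betw al {..<n} {..<n}" and ga: "bij_betw ga {..<n} {..<n}"
    and M: "\<forall>k<n. \<forall>j<n. 0 \<le> M k j"
    and rows: "\<forall>k<n. (\<Sum>j<n. M k j) = 1" and cols: "\<forall>j<n. (\<Sum>k<n. M k j) = 1"
  shows "(\<Sum>k<n. \<Sum>j<n. a (al k) * M k j * b (ga j)) \<le> (\<Sum>k<n. a k * b k)"
proof -
  define ia where "ia = inv_into {..<n} al"
  define ig where "ig = inv_into {..<n} ga"
  have bia: "bij_betw ia {..<n} {..<n}" unfolding ia_def by (rule bij_betw_inv_into[OF al])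
  have big: "bij_betw ig {..<n} {..<n}" unfolding ig_def by (rule bij_betw_inv_into[OF ga])
  have ia_lt: "p < n \<Longrightarrow> ia p < n" for p using bia bij_betwE by blast
  have ig_lt: "p < n \<Longrightarrow> ig p < n" for p using big bij_betwE by blast
  have al_ia: "p < n \<Longrightarrow> al (ia p) = p" for p unfolding ia_def
    by (metis al bij_betw_imp_surj_on f_inv_into_f lessThan_iff)
  have ga_ig: "p < n \<Longrightarrow> ga (ig p) = p" for p unfolding ig_def
    by (metis ga bij_betw_imp_surj_on f_inv_into_f lessThan_iff)
  define M' where "M' p q = M (ia p) (ig q)" for p q
  have "(\<Sum>k<n. \<Sum>j<n. a (al k) * M k j * b (ga j)) = (\<Sum>p<n. \<Sum>j<n. a (al (ia p)) * M (ia p) j * b (ga j))"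
    unfolding ia_def by (rule reindex_inv[OF al])
  also have "\<dots> = (\<Sum>p<n. \<Sum>q<n. a (al (ia p)) * M (ia p) (ig q) * b (ga (ig q)))"
    unfolding ig_def by (intro sum.cong refl reindex_inv[OF ga])
  also have "\<dots> = (\<Sum>p<n. \<Sum>q<n. a p * M' p q * b q)"
    unfolding M'_def by (intro sum.cong refl) (simp add: al_ia ga_ig)
  also have "\<dots> \<le> (\<Sum>k<n. a k * b k)"
  proof (rule rearrangement[OF da db])
    show "\<forall>k<n. \<forall>j<n. 0 \<le> M' k j" unfolding M'_def using M ia_lt ig_lt by auto
    show "\<forall>k<n. (\<Sum>j<n. M' k j) = 1"
    proof (intro allI impI)
      fix k assume k: "k < n"
      have "(\<Sum>j<n. M' k j) = (\<Sum>j<n. M (ia k) j)"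
        unfolding M'_def ig_def by (rule reindex_inv[OF ga, symmetric])
      thus "(\<Sum>j<n. M' k j) = 1" using rows ia_lt[OF k] by simp
    qed
    show "\<forall>j<n. (\<Sum>k<n. M' k j) = 1"
    proof (intro allI impI)
      fix j assume j: "j < n"
      have "(\<Sum>k<n. M' k j) = (\<Sum>k<n. M k (ig j))"
        unfolding M'_def ia_def by (rule reindex_inv[OF al, symmetric])
      thus "(\<Sum>k<n. M' k j) = 1" using cols ig_lt[OF j] by simp
    qed
  qed
  finally show ?thesis .
qed

lemma pd_psd: "pd_mat d A \<Longrightarrow> psd_mat d A"
  unfolding pd_mat_def psd_mat_def
proof (intro conjI ballI)
  fix v :: "complex vec" assume h: "hermitian_mat d A \<and> (\<forall>v\<in>carrier_vec d. v \<noteq> 0\<^sub>v d \<longrightarrow> 0 < Re (conjugate v \<bullet> (A *\<^sub>v v)))"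
    and v: "v \<in> carrier_vec d"
  show "0 \<le> Re (conjugate v \<bullet> (A *\<^sub>v v))"
  proof (cases "v = 0\<^sub>v d")
    case True
    have "A \<in> carrier_mat d d" using h unfolding hermitian_mat_def by auto
    thus ?thesis using True by (simp add: scalar_prod_def)
  next
    case False thus ?thesis using h v by force
  qed
qed auto

lemma unitary_col_nz: "unitary_mat d U \<Longrightarrow> i < d \<Longrightarrow> col U i \<noteq> 0\<^sub>v d"
proof
  assume u: "unitary_mat d U" and i: "i < d" and z: "col U i = 0\<^sub>v d"
  have U: "U \<in> carrier_mat d d" using u unitary_dims by auto
  have "\<forall>k<d. U $$ (k,i) = 0"
  proof (intro allI impI)
    fix k assume k: "k < d"
    have "col U i $ k = 0" using z k by simp
    thus "U $$ (k,i) = 0" using U k i by simp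
  qed
  hence "(\<Sum>k<d. cnj (U $$ (k,i)) * U $$ (k,i)) = 0" by simp
  thus False using unitary_orth_cols[OF u i i] by simp
qed

lemma udu_conj: assumes u: "unitary_mat d U"
  shows "mat_adjoint U * (U * mat_diag d g * mat_adjoint U) * U = mat_diag d g"
proof -
  have U: "U \<in> carrier_mat d d" using u unitary_dims by auto
  have "mat_adjoint U * (U * mat_diag d g * mat_adjoint U) * U = (mat_adjoint U * U) * mat_diag d g * (mat_adjoint U * U)"
    using U by (simp add: assoc_mult_mat[of _ d d _ d _ d])
  thus ?thesis using u unfolding unitary_mat_def by simp
qed

lemma pd_decomp:
  assumes "pd_mat d A"
  shows "\<exists>U f. unitary_mat d U \<and> (\<forall>i<d. 0 < f i) \<and> A = U * dg d f * mat_adjoint U"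
proof -
  have A: "A \<in> carrier_mat d d" and hA: "mat_adjoint A = A"
    using assms unfolding pd_mat_def hermitian_mat_def by auto
  from spectral[OF A hA] obtain U f where u: "unitary_mat d U" and Aeq: "A = U * dg d f * mat_adjoint U" by auto
  have U: "U \<in> carrier_mat d d" using u unitary_dims by auto
  have "0 < f i" if i: "i < d" for i
  proof -
    have "complex_of_real (f i) = (mat_adjoint U * A * U) $$ (i,i)"
      using udu_conj[OF u, of "\<lambda>i. complex_of_real (f i)"] i Aeq by simp
    also have "\<dots> = conjugate (col U i) \<bullet> (A *\<^sub>v col U i)" by (rule quad_entry_col[OF U A i])
    finally have "f i = Re (conjugate (col U i) \<bullet> (A *\<^sub>v col U i))" by (metis Re_complex_of_real)
    moreover have "col U i \<in> carrier_vec d" using U by auto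
    ultimately show ?thesis using assms unitary_col_nz[OF u i] unfolding pd_mat_def by auto
  qed
  thus ?thesis using u Aeq by blast
qed

lemma rev_bij: "bij_betw (\<lambda>t. d - 1 - t) {..<d} {..<(d::nat)}"
  by (rule bij_betwI[where g="\<lambda>t. d - 1 - t"]) auto

lemma unitary_sq_rows: "unitary_mat d Y \<Longrightarrow> i < d \<Longrightarrow> (\<Sum>j<d. (cmod (Y $$ (i,j)))^2) = 1"
proof -
  assume u: "unitary_mat d Y" and i: "i < d"
  have "complex_of_real (\<Sum>j<d. (cmod (Y $$ (i,j)))^2) = (\<Sum>j<d. Y $$ (i,j) * cnj (Y $$ (i,j)))"
    by (simp add: cnj_sq)
  also have "\<dots> = 1" using unitary_orth_rows[OF u i i] by simp
  finally show ?thesis by (metis of_real_eq_1_iff)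
qed

lemma unitary_sq_cols: "unitary_mat d Y \<Longrightarrow> j < d \<Longrightarrow> (\<Sum>i<d. (cmod (Y $$ (i,j)))^2) = 1"
proof -
  assume u: "unitary_mat d Y" and j: "j < d"
  have "complex_of_real (\<Sum>i<d. (cmod (Y $$ (i,j)))^2) = (\<Sum>i<d. cnj (Y $$ (i,j)) * Y $$ (i,j))"
    by (simp add: cnj_sq mult.commute)
  also have "\<dots> = 1" using unitary_orth_cols[OF u j j] by simp
  finally show ?thesis by (metis of_real_eq_1_iff)
qed

lemma main_bound:
  assumes bs: "bistochastic d \<Phi>" and pr: "pd_mat d \<rho>" and ps: "pd_mat d \<sigma>"
    and er: "eigenvalues_desc d \<rho> lam" and es: "eigenvalues_desc d \<sigma> mu"
  shows "rel_entropy (\<Phi> \<rho>) \<sigma> \<le> Re (mtrace (\<rho> * mat_log \<rho>)) - (\<Sum>j<d. lam j * log 2 (mu (d - 1 - j)))"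
proof -
  obtain W l where uW: "unitary_mat d W" and lpos: "\<forall>i<d. 0 < l i" and rho: "\<rho> = W * dg d l * mat_adjoint W"
    using pd_decomp[OF pr] by auto
  obtain V m where uV: "unitary_mat d V" and mpos: "\<forall>i<d. 0 < m i" and sig: "\<sigma> = V * dg d m * mat_adjoint V"
    using pd_decomp[OF ps] by auto
  have cpr: "char_poly \<rho> = (\<Prod>i<d. [:- complex_of_real (lam i), 1:])"
    using er unfolding eigenvalues_desc_def by auto
  have cps: "char_poly \<sigma> = (\<Prod>i<d. [:- complex_of_real (mu i), 1:])"
    using es unfolding eigenvalues_desc_def by auto
  obtain al where bal: "bij_betw al {..<d} {..<d}" and lal: "\<forall>i<d. l i = lam (al i)"
    using eig_perm[OF uW rho cpr] by auto
  obtain be where bbe: "bij_betw be {..<d} {..<d}" and mbe: "\<forall>i<d. m i = mu (be i)"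
    using eig_perm[OF uV sig cps] by auto
  have dlam: "\<forall>i j. i \<le> j \<longrightarrow> j < d \<longrightarrow> lam j \<le> lam i" using er unfolding eigenvalues_desc_def by auto
  have dmu: "\<forall>i j. i \<le> j \<longrightarrow> j < d \<longrightarrow> mu j \<le> mu i" using es unfolding eigenvalues_desc_def by auto
  have mu_pos: "0 < mu j" if j: "j < d" for j
  proof -
    obtain i where "i < d" "be i = j" using bbe j by (metis bij_betw_iff_bijections lessThan_iff)
    thus ?thesis using mpos mbe by auto
  qed
  interpret cs: chan_setup d \<Phi> W l by unfold_locales (rule bs, rule uW)
  have "psd_mat d (\<Phi> \<rho>)" by (rule cp_psd[OF bs pd_psd[OF pr]])
  hence Pr: "\<Phi> \<rho> \<in> carrier_mat d d" and hPr: "mat_adjoint (\<Phi> \<rho>) = \<Phi> \<rho>"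
    unfolding psd_mat_def hermitian_mat_def by auto
  obtain X \<nu> where uX: "unitary_mat d X" and Preq: "\<Phi> \<rho> = X * dg d \<nu> * mat_adjoint X"
    using spectral[OF Pr hPr] by auto
  define D where "D = cs.D X"
  have Dnn: "\<And>i k. i < d \<Longrightarrow> 0 \<le> D i k" unfolding D_def by (rule cs.D_nonneg[OF uX])
  have Drows: "\<And>i. i < d \<Longrightarrow> (\<Sum>k<d. D i k) = 1" unfolding D_def by (rule cs.D_rows[OF uX])
  have Dcols: "\<And>k. k < d \<Longrightarrow> (\<Sum>i<d. D i k) = 1" unfolding D_def by (rule cs.D_cols[OF uX])
  have nu: "\<And>i. i < d \<Longrightarrow> \<nu> i = (\<Sum>k<d. D i k * l k)"
    unfolding D_def by (rule cs.nu_eq[OF uX]) (use Preq rho in simp)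
  have nupos: "\<forall>i<d. 0 < \<nu> i"
    using row_jensen(1)[of "{..<d}" "D _" l] Dnn Drows lpos nu by auto
  have nuent: "\<nu> i * log 2 (\<nu> i) \<le> (\<Sum>k<d. D i k * (l k * log 2 (l k)))" if i: "i < d" for i
    using row_jensen(2)[of "{..<d}" "D i" l] Dnn[OF i] Drows[OF i] lpos nu[OF i] by auto
  have ent: "(\<Sum>i<d. \<nu> i * log 2 (\<nu> i)) \<le> (\<Sum>k<d. l k * log 2 (l k))"
  proof -
    have "(\<Sum>i<d. \<nu> i * log 2 (\<nu> i)) \<le> (\<Sum>i<d. \<Sum>k<d. D i k * (l k * log 2 (l k)))"
      by (intro sum_mono nuent) auto
    also have "\<dots> = (\<Sum>k<d. \<Sum>i<d. D i k * (l k * log 2 (l k)))"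
      by (rule sum.swap)
    also have "\<dots> = (\<Sum>k<d. (\<Sum>i<d. D i k) * (l k * log 2 (l k)))"
      by (simp add: sum_distrib_right)
    also have "\<dots> = (\<Sum>k<d. l k * log 2 (l k))" using Dcols by simp
    finally show ?thesis .
  qed
  have tr_rho: "Re (mtrace (\<rho> * mat_log \<rho>)) = (\<Sum>k<d. l k * log 2 (l k))"
    unfolding rho by (rule trace_entropy[OF uW lpos])
  have tr_Pr: "Re (mtrace (\<Phi> \<rho> * mat_log (\<Phi> \<rho>))) = (\<Sum>i<d. \<nu> i * log 2 (\<nu> i))"
    unfolding Preq by (rule trace_entropy[OF uX nupos])
  define Y where "Y = mat_adjoint X * V"
  have uY: "unitary_mat d Y" unfolding Y_def by (rule unitary_mult[OF unitary_adj[OF uX] uV])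
  define Q where "Q i j = (cmod (Y $$ (i,j)))^2" for i j
  define c where "c j = - log 2 (m j)" for j
  have tr_cross: "Re (mtrace (\<Phi> \<rho> * mat_log \<sigma>)) = (\<Sum>i<d. \<Sum>j<d. \<nu> i * Q i j * log 2 (m j))"
  proof -
    have "mat_log \<sigma> = V * dg d (\<lambda>i. log 2 (m i)) * mat_adjoint V" by (rule mat_log_eq[OF uV mpos sig])
    thus ?thesis unfolding Preq Q_def Y_def by (simp add: trace_cross[OF uX uV])
  qed
  define M where "M k j = (\<Sum>i<d. D i k * Q i j)" for k j
  have cross_eq: "- (\<Sum>i<d. \<Sum>j<d. \<nu> i * Q i j * log 2 (m j)) = (\<Sum>k<d. \<Sum>j<d. l k * M k j * c j)"
  proof -
    have "- (\<Sum>i<d. \<Sum>j<d. \<nu> i * Q i j * log 2 (m j)) = (\<Sum>i<d. \<Sum>j<d. \<Sum>k<d. D i k * l k * Q i j * c j)"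
      unfolding c_def by (simp add: nu sum_distrib_right sum_negf[symmetric])
    also have "\<dots> = (\<Sum>i<d. \<Sum>k<d. \<Sum>j<d. D i k * l k * Q i j * c j)"
      by (intro sum.cong refl sum.swap)
    also have "\<dots> = (\<Sum>k<d. \<Sum>i<d. \<Sum>j<d. D i k * l k * Q i j * c j)"
      by (rule sum.swap)
    also have "\<dots> = (\<Sum>k<d. \<Sum>j<d. \<Sum>i<d. D i k * l k * Q i j * c j)"
      by (intro sum.cong refl sum.swap)
    also have "\<dots> = (\<Sum>k<d. \<Sum>j<d. l k * M k j * c j)"
      unfolding M_def by (simp add: sum_distrib_right sum_distrib_left algebra_simps)
    finally show ?thesis .
  qed
  have Mnn: "\<forall>k<d. \<forall>j<d. 0 \<le> M k j" unfolding M_def Q_def using Dnn by (auto intro: sum_nonneg)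
  have Mrows: "\<forall>k<d. (\<Sum>j<d. M k j) = 1"
  proof (intro allI impI)
    fix k assume k: "k < d"
    have "(\<Sum>j<d. M k j) = (\<Sum>i<d. \<Sum>j<d. D i k * Q i j)"
      unfolding M_def by (rule sum.swap)
    also have "\<dots> = (\<Sum>i<d. D i k * (\<Sum>j<d. Q i j))"
      by (simp add: sum_distrib_left)
    also have "\<dots> = (\<Sum>i<d. D i k)" unfolding Q_def using unitary_sq_rows[OF uY] by simp
    finally show "(\<Sum>j<d. M k j) = 1" using Dcols k by simp
  qed
  have Mcols: "\<forall>j<d. (\<Sum>k<d. M k j) = 1"
  proof (intro allI impI)
    fix j assume j: "j < d"
    have "(\<Sum>k<d. M k j) = (\<Sum>i<d. \<Sum>k<d. D i k * Q i j)"
      unfolding M_def by (rule sum.swap)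
    also have "\<dots> = (\<Sum>i<d. (\<Sum>k<d. D i k) * Q i j)"
      by (simp add: sum_distrib_right)
    also have "\<dots> = (\<Sum>i<d. Q i j)" using Drows by simp
    finally show "(\<Sum>k<d. M k j) = 1" unfolding Q_def using unitary_sq_cols[OF uY j] by simp
  qed
  define b where "b t = - log 2 (mu (d - 1 - t))" for t
  define ga where "ga j = d - 1 - be j" for j
  have bga: "bij_betw ga {..<d} {..<d}" unfolding ga_def
    using bij_betw_trans[OF bbe rev_bij[of d]] by (simp add: o_def)
  have db: "\<forall>i j. i \<le> j \<longrightarrow> j < d \<longrightarrow> b j \<le> b i"
  proof (intro allI impI)
    fix i j assume ij: "i \<le> j" "j < d"
    have "mu (d - 1 - i) \<le> mu (d - 1 - j)" using dmu ij by auto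
    hence "log 2 (mu (d - 1 - i)) \<le> log 2 (mu (d - 1 - j))" using mu_pos ij by (intro log_mono) auto
    thus "b j \<le> b i" unfolding b_def by simp
  qed
  have bc: "b (ga j) = c j" if j: "j < d" for j
  proof -
    have "be j < d" using bbe j bij_betwE by blast
    hence "d - 1 - ga j = be j" unfolding ga_def by auto
    thus ?thesis unfolding b_def c_def using mbe j by simp
  qed
  have "(\<Sum>k<d. \<Sum>j<d. l k * M k j * c j) = (\<Sum>k<d. \<Sum>j<d. lam (al k) * M k j * b (ga j))"
    using lal bc by (intro sum.cong refl) auto
  also have "\<dots> \<le> (\<Sum>k<d. lam k * b k)"
    by (rule rearr_perm[OF dlam db bal bga Mnn Mrows Mcols])
  finally have cross_le: "(\<Sum>k<d. \<Sum>j<d. l k * M k j * c j) \<le> (\<Sum>k<d. lam k * b k)" .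
  have "rel_entropy (\<Phi> \<rho>) \<sigma> = (\<Sum>i<d. \<nu> i * log 2 (\<nu> i)) - (\<Sum>i<d. \<Sum>j<d. \<nu> i * Q i j * log 2 (m j))"
    unfolding rel_entropy_def using tr_Pr tr_cross by simp
  also have "\<dots> \<le> (\<Sum>k<d. l k * log 2 (l k)) + (\<Sum>k<d. lam k * b k)"
    using ent cross_le cross_eq by linarith
  also have "\<dots> = Re (mtrace (\<rho> * mat_log \<rho>)) - (\<Sum>j<d. lam j * log 2 (mu (d - 1 - j)))"
    unfolding tr_rho b_def by (simp add: sum_negf)
  finally show ?thesis .
qed

lemma sum_if_const: "(\<Sum>b\<in>B. if P then f b else 0) = (if P then (\<Sum>b\<in>B. f b) else (0::'a::comm_monoid_add))"
  by (cases P) auto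

lemma sum_pairs: "(\<Sum>i<d*k. f i) = (\<Sum>q<d. \<Sum>x<k. (f (q*k + x) :: 'a :: comm_monoid_add))"
  for d k :: nat
proof (induction d)
  case (Suc d)
  have "(\<Sum>i<Suc d * k. f i) = (\<Sum>i\<in>{0..<d*k}. f i) + (\<Sum>i\<in>{d*k..<d*k+k}. f i)"
    by (simp add: lessThan_atLeast0 sum.atLeastLessThan_concat add.commute)
  also have "(\<Sum>i\<in>{d*k..<d*k+k}. f i) = (\<Sum>x<k. f (d*k + x))"
  proof -
    have "(\<Sum>i\<in>{d*k..<d*k+k}. f i) = (\<Sum>i\<in>{0+d*k..<k+d*k}. f i)" by (simp add: add.commute)
    also have "\<dots> = (\<Sum>x\<in>{0..<k}. f (x + d*k))" by (rule sum.shift_bounds_nat_ivl)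
    finally show ?thesis by (simp add: lessThan_atLeast0 add.commute)
  qed
  finally show ?case using Suc by (simp add: lessThan_atLeast0 lessThan_Suc)
qed simp

lemma pair_lt: "(a::nat) < d \<Longrightarrow> x < k \<Longrightarrow> a * k + x < d * k"
proof -
  assume "a < d" "x < k"
  hence "a * k + x < a * k + k" by simp
  also have "\<dots> = Suc a * k" by simp
  also have "\<dots> \<le> d * k" using \<open>a < d\<close> by (intro mult_right_mono) auto
  finally show ?thesis .
qed

lemma quad_congr:
  assumes X: "(X :: complex mat) \<in> carrier_mat n n" and M: "M \<in> carrier_mat n n" and v: "v \<in> carrier_vec n"
  shows "conjugate v \<bullet> ((X * M * mat_adjoint X) *\<^sub>v v) = conjugate (mat_adjoint X *\<^sub>v v) \<bullet> (M *\<^sub>v (mat_adjoint X *\<^sub>v v))"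
proof -
  define w where "w = mat_adjoint X *\<^sub>v v"
  have w: "w \<in> carrier_vec n" unfolding w_def using X v by (intro mult_mat_vec_carrier[of _ n n]) auto
  define u where "u = M *\<^sub>v w"
  have u: "u \<in> carrier_vec n" unfolding u_def using M w by (intro mult_mat_vec_carrier[of _ n n]) auto
  have "(X * M * mat_adjoint X) *\<^sub>v v = (X * M) *\<^sub>v w"
    unfolding w_def by (rule assoc_mult_mat_vec) (use X M v in auto)
  also have "\<dots> = X *\<^sub>v u" unfolding u_def by (rule assoc_mult_mat_vec) (use X M w in auto)
  finally have "(X * M * mat_adjoint X) *\<^sub>v v = X *\<^sub>v u" .
  hence "conjugate v \<bullet> ((X * M * mat_adjoint X) *\<^sub>v v) = (\<Sum>i<n. cnj (v $ i) * (\<Sum>j<n. X $$ (i,j) * u $ j))"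
    using X u v by (simp add: scalar_prod_def lessThan_atLeast0 conjugate_vec_def)
  also have "\<dots> = (\<Sum>i<n. \<Sum>j<n. cnj (v $ i) * X $$ (i,j) * u $ j)"
    by (simp add: sum_distrib_left mult.assoc)
  also have "\<dots> = (\<Sum>j<n. \<Sum>i<n. cnj (v $ i) * X $$ (i,j) * u $ j)" by (rule sum.swap)
  also have "\<dots> = (\<Sum>j<n. cnj (w $ j) * u $ j)"
    unfolding w_def using X v by (intro sum.cong refl) (simp add: scalar_prod_def lessThan_atLeast0 cnj_sum sum_distrib_right sum_distrib_left ac_simps)
  also have "\<dots> = conjugate w \<bullet> u"
    using w u by (simp add: scalar_prod_def lessThan_atLeast0 conjugate_vec_def)
  finally show ?thesis unfolding u_def w_def .
qed

lemma psd_congr: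
  assumes X: "(X :: complex mat) \<in> carrier_mat n n" and M: "psd_mat n M"
  shows "psd_mat n (X * M * mat_adjoint X)"
proof -
  have Mc: "M \<in> carrier_mat n n" and hM: "mat_adjoint M = M" using M unfolding psd_mat_def hermitian_mat_def by auto
  have "mat_adjoint (X * M * mat_adjoint X) = X * M * mat_adjoint X"
    using X Mc hM by (simp add: adj_mult[of _ n n _ n] assoc_mult_mat[of _ n n _ n _ n])
  moreover have "X * M * mat_adjoint X \<in> carrier_mat n n" using X Mc by simp
  moreover have "0 \<le> Re (conjugate v \<bullet> ((X * M * mat_adjoint X) *\<^sub>v v))" if v: "v \<in> carrier_vec n" for v
  proof -
    have "mat_adjoint X *\<^sub>v v \<in> carrier_vec n" using X v by (intro mult_mat_vec_carrier[of _ n n]) auto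
    thus ?thesis unfolding quad_congr[OF X Mc v] using M unfolding psd_mat_def by auto
  qed
  ultimately show ?thesis unfolding psd_mat_def hermitian_mat_def by auto
qed

lemma uBu_entry: "U \<in> carrier_mat d d \<Longrightarrow> B \<in> carrier_mat d d \<Longrightarrow> p < d \<Longrightarrow> q < d \<Longrightarrow>
  (U * B * mat_adjoint U) $$ (p,q) = (\<Sum>a<d. \<Sum>b<d. U $$ (p,a) * B $$ (a,b) * cnj (U $$ (q,b)))"
proof -
  assume U: "U \<in> carrier_mat d d" and B: "B \<in> carrier_mat d d" and pq: "p < d" "q < d"
  have "(U * B * mat_adjoint U) $$ (p,q) = (\<Sum>b<d. (\<Sum>a<d. U $$ (p,a) * B $$ (a,b)) * cnj (U $$ (q,b)))"
    using U B pq by simp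
  also have "\<dots> = (\<Sum>b<d. \<Sum>a<d. U $$ (p,a) * B $$ (a,b) * cnj (U $$ (q,b)))"
    by (simp add: sum_distrib_right)
  also have "\<dots> = (\<Sum>a<d. \<Sum>b<d. U $$ (p,a) * B $$ (a,b) * cnj (U $$ (q,b)))" by (rule sum.swap)
  finally show ?thesis .
qed

lemma conj_cp:
  assumes U: "U \<in> carrier_mat d d"
  shows "completely_positive d (\<lambda>A. U * A * mat_adjoint U)"
  unfolding completely_positive_def
proof (intro allI impI)
  fix k M assume M: "psd_mat (d*k) M"
  define n where "n = d * k"
  have Mc: "M \<in> carrier_mat n n" using M unfolding n_def psd_mat_def hermitian_mat_def by auto
  define Ut where "Ut = Matrix.mat n n (\<lambda>(i,j). if i mod k = j mod k then U $$ (i div k, j div k) else 0)"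
  have Ut: "Ut \<in> carrier_mat n n" unfolding Ut_def by auto
  have kpos: "0 < k" if "i < n" for i using that unfolding n_def by (cases k) auto
  have divl: "i div k < d" if "i < n" for i using that unfolding n_def
    by (metis less_mult_imp_div_less)
  have modl: "i mod k < k" if "i < n" for i using kpos[OF that] by simp
  have T: "tensor_id d k (\<lambda>A. U * A * mat_adjoint U) M = Ut * M * mat_adjoint Ut"
  proof (rule eq_matI)
    fix i j assume "i < dim_row (Ut * M * mat_adjoint Ut)" "j < dim_col (Ut * M * mat_adjoint Ut)"
    hence ij: "i < n" "j < n" using Ut Mc by auto
    define B where "B = Matrix.mat d d (\<lambda>(a,b). M $$ (a*k + i mod k, b*k + j mod k))"
    have B: "B \<in> carrier_mat d d" unfolding B_def by auto
    have "tensor_id d k (\<lambda>A. U * A * mat_adjoint U) M $$ (i,j) = (U * B * mat_adjoint U) $$ (i div k, j div k)"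
      unfolding tensor_id_def B_def using ij n_def by simp
    also have "\<dots> = (\<Sum>a<d. \<Sum>b<d. U $$ (i div k,a) * M $$ (a*k + i mod k, b*k + j mod k) * cnj (U $$ (j div k,b)))"
      using uBu_entry[OF U B divl[OF ij(1)] divl[OF ij(2)]] unfolding B_def by simp
    also have "\<dots> = (Ut * M * mat_adjoint Ut) $$ (i,j)"
    proof -
      have "(Ut * M * mat_adjoint Ut) $$ (i,j) = (\<Sum>p<n. \<Sum>p'<n. Ut $$ (i,p) * M $$ (p,p') * cnj (Ut $$ (j,p')))"
        by (rule uBu_entry[OF Ut Mc ij])
      also have "\<dots> = (\<Sum>a<d. \<Sum>x<k. \<Sum>b<d. \<Sum>y<k. Ut $$ (i,a*k+x) * M $$ (a*k+x,b*k+y) * cnj (Ut $$ (j,b*k+y)))"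
        unfolding n_def sum_pairs by simp
      also have "\<dots> = (\<Sum>a<d. \<Sum>x<k. \<Sum>b<d. \<Sum>y<k. (if x = i mod k then U $$ (i div k, a) else 0) * M $$ (a*k+x,b*k+y) * cnj (if y = j mod k then U $$ (j div k, b) else 0))"
        using ij unfolding Ut_def by (intro sum.cong refl) (auto simp: pair_lt n_def)
      also have "\<dots> = (\<Sum>a<d. \<Sum>b<d. U $$ (i div k, a) * M $$ (a*k + i mod k, b*k + j mod k) * cnj (U $$ (j div k, b)))"
        using modl[OF ij(1)] modl[OF ij(2)]
        by (simp add: if_distrib[of "\<lambda>x. x * _"] if_distrib[of "\<lambda>x. _ * x"] if_distrib[of cnj] sum_if_const cong: if_cong)
      finally show ?thesis by simp
    qed
    finally show "tensor_id d k (\<lambda>A. U * A * mat_adjoint U) M $$ (i,j) = (Ut * M * mat_adjoint Ut) $$ (i,j)" .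
  qed (use Ut Mc n_def in \<open>auto simp: tensor_id_def\<close>)
  show "psd_mat (d*k) (tensor_id d k (\<lambda>A. U * A * mat_adjoint U) M)"
    unfolding T using psd_congr[OF Ut, of M] M unfolding n_def by simp
qed

lemma conj_bistochastic:
  assumes u: "unitary_mat d U"
  shows "bistochastic d (\<lambda>A. U * A * mat_adjoint U)"
proof -
  have U: "U \<in> carrier_mat d d" using u unitary_dims by auto
  have lin: "linear_map_on d (\<lambda>A. U * A * mat_adjoint U)"
    unfolding linear_map_on_def
  proof (intro conjI ballI allI)
    fix A :: "complex mat" assume A: "A \<in> carrier_mat d d"
    show "U * A * mat_adjoint U \<in> carrier_mat d d" using U A by simp
    fix B :: "complex mat" assume B: "B \<in> carrier_mat d d"
    show "U * (A + B) * mat_adjoint U = U * A * mat_adjoint U + U * B * mat_adjoint U"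
      using U A B by (simp add: mult_add_distrib_mat[of _ d d] add_mult_distrib_mat[of _ d d _ _ d])
  next
    fix A :: "complex mat" and c assume A: "A \<in> carrier_mat d d"
    show "U * (c \<cdot>\<^sub>m A) * mat_adjoint U = c \<cdot>\<^sub>m (U * A * mat_adjoint U)"
      using U A by (simp add: mult_smult_distrib[of _ d d _ d] mult_smult_assoc_mat[of _ d d _ d])
  qed
  have tr: "mtrace (U * A * mat_adjoint U) = mtrace A" if A: "A \<in> carrier_mat d d" for A
  proof -
    have "mtrace ((U * A) * mat_adjoint U) = mtrace (mat_adjoint U * (U * A))"
      by (rule mtrace_mult_comm[of _ d d]) (use U A in auto)
    also have "mat_adjoint U * (U * A) = A" by (rule unitary_cancel(1)[OF u A])
    finally show ?thesis .
  qed
  have "U * 1\<^sub>m d * mat_adjoint U = 1\<^sub>m d" using U unitary_right[OF u] by simp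
  thus ?thesis unfolding bistochastic_def using lin tr conj_cp[OF U] by auto
qed

lemma reidx: "bij_betw h {..<d} {..<d} \<Longrightarrow> (\<Sum>j<d. f (h j)) = (\<Sum>t<(d::nat). f t)"
  using sum.reindex_bij_betw[of h "{..<d}" "{..<d}" f] by simp

lemma perm_unitary:
  assumes bp: "bij_betw p {..<d} {..<d}"
  defines "Q \<equiv> Matrix.mat d d (\<lambda>(i,j). if j = p i then (1::complex) else 0)"
  shows "unitary_mat d Q"
proof -
  have Q: "Q \<in> carrier_mat d d" unfolding Q_def by auto
  have "mat_adjoint Q * Q = 1\<^sub>m d"
  proof (rule eq_matI)
    fix i j assume "i < dim_row (1\<^sub>m d)" "j < dim_col (1\<^sub>m d)"
    hence ij: "i < d" "j < d" by auto
    have "(mat_adjoint Q * Q) $$ (i,j) = (\<Sum>k<d. (if i = p k then 1 else 0) * (if j = p k then 1 else 0))"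
      using ij Q unfolding Q_def by (intro trans[OF mult_index]) (auto simp: if_distrib[of cnj] cong: if_cong)
    also have "\<dots> = (\<Sum>t<d. (if i = t then 1 else 0) * (if j = t then 1 else 0))"
      by (rule reidx[OF bp, of "\<lambda>t. (if i = t then 1 else 0) * (if j = t then (1::complex) else 0)"])
    also have "\<dots> = 1\<^sub>m d $$ (i,j)" using ij by (simp add: if_distrib[of "\<lambda>x. x * _"] cong: if_cong)
    finally show "(mat_adjoint Q * Q) $$ (i,j) = 1\<^sub>m d $$ (i,j)" .
  qed (use Q in auto)
  thus ?thesis using Q unfolding unitary_mat_def by auto
qed

lemma perm_diag:
  assumes bp: "bij_betw p {..<d} {..<d}"
  defines "Q \<equiv> Matrix.mat d d (\<lambda>(i,j). if j = p i then (1::complex) else 0)"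
  shows "Q * dg d l * mat_adjoint Q = dg d (\<lambda>i. l (p i))"
proof -
  have Q: "Q \<in> carrier_mat d d" unfolding Q_def by auto
  have pl: "i < d \<Longrightarrow> p i < d" for i using bp bij_betwE by blast
  have pinj: "i < d \<Longrightarrow> j < d \<Longrightarrow> p i = p j \<Longrightarrow> i = j" for i j
    using bp unfolding bij_betw_def inj_on_def by auto
  show ?thesis
  proof (rule eq_matI)
    fix i j assume "i < dim_row (dg d (\<lambda>i. l (p i)))" "j < dim_col (dg d (\<lambda>i. l (p i)))"
    hence ij: "i < d" "j < d" by auto
    have "(Q * dg d l * mat_adjoint Q) $$ (i,j) = (\<Sum>k<d. Q $$ (i,k) * complex_of_real (l k) * mat_adjoint Q $$ (k,j))"
      by (rule udv_entry) (use Q ij in auto)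
    also have "\<dots> = (\<Sum>k<d. (if k = p i then complex_of_real (l k) * (if k = p j then 1 else 0) else 0))"
      using ij unfolding Q_def by (intro sum.cong refl) auto
    also have "\<dots> = (if p i = p j then complex_of_real (l (p i)) else 0)"
      using pl[OF ij(1)] by (simp add: sum.delta')
    also have "\<dots> = dg d (\<lambda>i. l (p i)) $$ (i,j)" using ij pinj by auto
    finally show "(Q * dg d l * mat_adjoint Q) $$ (i,j) = dg d (\<lambda>i. l (p i)) $$ (i,j)" .
  qed (use Q in auto)
qed

lemma rel_entropy_same_basis:
  assumes uV: "unitary_mat d V" and gpos: "\<forall>i<d. 0 < g i" and mpos: "\<forall>i<d. 0 < m i"
  shows "rel_entropy (V * dg d g * mat_adjoint V) (V * dg d m * mat_adjoint V)
     = (\<Sum>i<d. g i * log 2 (g i)) - (\<Sum>i<d. g i * log 2 (m i))"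
proof -
  have V: "V \<in> carrier_mat d d" using uV unitary_dims by auto
  have ml: "mat_log (V * dg d m * mat_adjoint V) = V * dg d (\<lambda>i. log 2 (m i)) * mat_adjoint V"
    by (rule mat_log_eq[OF uV mpos refl])
  have VV: "mat_adjoint V * V = 1\<^sub>m d" using uV unfolding unitary_mat_def by auto
  have "Re (mtrace ((V * dg d g * mat_adjoint V) * (V * dg d (\<lambda>i. log 2 (m i)) * mat_adjoint V)))
     = (\<Sum>i<d. \<Sum>j<d. g i * (cmod ((mat_adjoint V * V) $$ (i,j)))^2 * log 2 (m j))"
    by (rule trace_cross[OF uV uV])
  also have "\<dots> = (\<Sum>i<d. \<Sum>j<d. (if i = j then g i * log 2 (m j) else 0))"
    unfolding VV by (intro sum.cong refl) auto
  also have "\<dots> = (\<Sum>i<d. g i * log 2 (m i))" by (simp add: sum.delta)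
  finally have cr: "Re (mtrace ((V * dg d g * mat_adjoint V) * mat_log (V * dg d m * mat_adjoint V))) = (\<Sum>i<d. g i * log 2 (m i))"
    unfolding ml .
  show ?thesis unfolding rel_entropy_def using trace_entropy[OF uV gpos] cr by simp
qed

lemma attain:
  assumes pr: "pd_mat d \<rho>" and ps: "pd_mat d \<sigma>"
    and er: "eigenvalues_desc d \<rho> lam" and es: "eigenvalues_desc d \<sigma> mu"
  shows "\<exists>U. unitary_mat d U \<and> rel_entropy (U * \<rho> * mat_adjoint U) \<sigma>
     = Re (mtrace (\<rho> * mat_log \<rho>)) - (\<Sum>j<d. lam j * log 2 (mu (d - 1 - j)))"
proof -
  obtain W l where uW: "unitary_mat d W" and lpos: "\<forall>i<d. 0 < l i" and rho: "\<rho> = W * dg d l * mat_adjoint W"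
    using pd_decomp[OF pr] by auto
  obtain V m where uV: "unitary_mat d V" and mpos: "\<forall>i<d. 0 < m i" and sig: "\<sigma> = V * dg d m * mat_adjoint V"
    using pd_decomp[OF ps] by auto
  have cpr: "char_poly \<rho> = (\<Prod>i<d. [:- complex_of_real (lam i), 1:])"
    using er unfolding eigenvalues_desc_def by auto
  have cps: "char_poly \<sigma> = (\<Prod>i<d. [:- complex_of_real (mu i), 1:])"
    using es unfolding eigenvalues_desc_def by auto
  obtain al where bal: "bij_betw al {..<d} {..<d}" and lal: "\<forall>i<d. l i = lam (al i)"
    using eig_perm[OF uW rho cpr] by auto
  obtain be where bbe: "bij_betw be {..<d} {..<d}" and mbe: "\<forall>i<d. m i = mu (be i)"
    using eig_perm[OF uV sig cps] by auto
  have W: "W \<in> carrier_mat d d" and V: "V \<in> carrier_mat d d" using uW uV unitary_dims by auto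
  define ia where "ia = inv_into {..<d} al"
  have bia: "bij_betw ia {..<d} {..<d}" unfolding ia_def by (rule bij_betw_inv_into[OF bal])
  have al_ia: "t < d \<Longrightarrow> al (ia t) = t" for t unfolding ia_def
    by (metis bal bij_betw_imp_surj_on f_inv_into_f lessThan_iff)
  define rb where "rb j = d - 1 - be j" for j
  have brb: "bij_betw rb {..<d} {..<d}" unfolding rb_def
    using bij_betw_trans[OF bbe rev_bij[of d]] by (simp add: o_def)
  have rbl: "j < d \<Longrightarrow> rb j < d" for j using brb bij_betwE by blast
  define p where "p j = ia (rb j)" for j
  have bp: "bij_betw p {..<d} {..<d}" unfolding p_def
    using bij_betw_trans[OF brb bia] by (simp add: o_def)
  have ial: "t < d \<Longrightarrow> ia t < d" for t using bia bij_betwE by blast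
  define g where "g j = l (p j)" for j
  have g_eq: "j < d \<Longrightarrow> g j = lam (rb j)" for j
    unfolding g_def p_def using lal ial rbl al_ia by auto
  have gpos: "\<forall>i<d. 0 < g i" unfolding g_def p_def using lpos ial rbl by auto
  define Q where "Q = Matrix.mat d d (\<lambda>(i,j). if j = p i then (1::complex) else 0)"
  have uQ: "unitary_mat d Q" unfolding Q_def by (rule perm_unitary[OF bp])
  have Q: "Q \<in> carrier_mat d d" using uQ unitary_dims by auto
  define U where "U = V * Q * mat_adjoint W"
  have uU: "unitary_mat d U" unfolding U_def
    by (intro unitary_mult[OF unitary_mult[OF uV uQ] unitary_adj[OF uW]])
  have c1: "\<And>X. X \<in> carrier_mat d d \<Longrightarrow> mat_adjoint W * (W * X) = X"
    by (rule unitary_cancel(1)[OF uW])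
  have "U * \<rho> * mat_adjoint U = V * (Q * dg d l * mat_adjoint Q) * mat_adjoint V"
    unfolding U_def rho using V Q W
    by (simp add: adj_mult[of _ d d _ d] assoc_mult_mat[of _ d d _ d _ d] c1)
  also have "Q * dg d l * mat_adjoint Q = dg d g" unfolding Q_def g_def by (rule perm_diag[OF bp])
  finally have Ur: "U * \<rho> * mat_adjoint U = V * dg d g * mat_adjoint V" .
  have "rel_entropy (U * \<rho> * mat_adjoint U) \<sigma> = (\<Sum>i<d. g i * log 2 (g i)) - (\<Sum>i<d. g i * log 2 (m i))"
    unfolding Ur sig by (rule rel_entropy_same_basis[OF uV gpos mpos])
  also have "(\<Sum>i<d. g i * log 2 (g i)) = (\<Sum>t<d. lam t * log 2 (lam t))"
  proof -
    have "(\<Sum>i<d. g i * log 2 (g i)) = (\<Sum>i<d. lam (rb i) * log 2 (lam (rb i)))" using g_eq by simp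
    also have "\<dots> = (\<Sum>t<d. lam t * log 2 (lam t))" by (rule reidx[OF brb])
    finally show ?thesis .
  qed
  also have "(\<Sum>i<d. g i * log 2 (m i)) = (\<Sum>t<d. lam t * log 2 (mu (d - 1 - t)))"
  proof -
    have "(\<Sum>i<d. g i * log 2 (m i)) = (\<Sum>i<d. lam (d - 1 - be i) * log 2 (mu (be i)))"
      using g_eq mbe unfolding rb_def by simp
    also have "\<dots> = (\<Sum>s<d. lam (d - 1 - s) * log 2 (mu s))"
      by (rule reidx[OF bbe, of "\<lambda>s. lam (d - 1 - s) * log 2 (mu s)"])
    also have "\<dots> = (\<Sum>t<d. lam (d - 1 - (d - 1 - t)) * log 2 (mu (d - 1 - t)))"
      by (rule reidx[OF rev_bij, symmetric])
    also have "\<dots> = (\<Sum>t<d. lam t * log 2 (mu (d - 1 - t)))"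
      by (intro sum.cong refl) (auto simp: Suc_diff_Suc)
    finally show ?thesis .
  qed
  also have "(\<Sum>t<d. lam t * log 2 (lam t)) = Re (mtrace (\<rho> * mat_log \<rho>))"
  proof -
    have "Re (mtrace (\<rho> * mat_log \<rho>)) = (\<Sum>k<d. l k * log 2 (l k))"
      unfolding rho by (rule trace_entropy[OF uW lpos])
    also have "\<dots> = (\<Sum>k<d. lam (al k) * log 2 (lam (al k)))" using lal by simp
    also have "\<dots> = (\<Sum>t<d. lam t * log 2 (lam t))" by (rule reidx[OF bal])
    finally show ?thesis by simp
  qed
  finally show ?thesis using uU by blast
qed

theorem mainTheorem6:
  fixes d :: nat and \<rho> \<sigma> :: "complex mat" and lam mu :: "nat \<Rightarrow> real"
  assumes "pd_mat d \<rho>" and "pd_mat d \<sigma>"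
    and "eigenvalues_desc d \<rho> lam" and "eigenvalues_desc d \<sigma> mu"
  defines "R \<equiv> Re (mtrace (\<rho> * mat_log \<rho>)) - (\<Sum>j<d. lam j * log 2 (mu (d - 1 - j)))"
  shows "(\<forall>\<Phi>. bistochastic d \<Phi> \<longrightarrow> rel_entropy (\<Phi> \<rho>) \<sigma> \<le> R)
       \<and> (\<exists>\<Phi>. bistochastic d \<Phi> \<and> rel_entropy (\<Phi> \<rho>) \<sigma> = R)
       \<and> (\<forall>U. unitary_mat d U \<longrightarrow> rel_entropy (U * \<rho> * mat_adjoint U) \<sigma> \<le> R)
       \<and> (\<exists>U. unitary_mat d U \<and> rel_entropy (U * \<rho> * mat_adjoint U) \<sigma> = R)"
proof (intro conjI)
  show A: "\<forall>\<Phi>. bistochastic d \<Phi> \<longrightarrow> rel_entropy (\<Phi> \<rho>) \<sigma> \<le> R"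
    unfolding R_def using main_bound[OF _ assms(1-4)] by blast
  obtain U where uU: "unitary_mat d U" and eq: "rel_entropy (U * \<rho> * mat_adjoint U) \<sigma> = R"
    unfolding R_def using attain[OF assms(1-4)] by blast
  show "\<exists>U. unitary_mat d U \<and> rel_entropy (U * \<rho> * mat_adjoint U) \<sigma> = R" using uU eq by blast
  show "\<exists>\<Phi>. bistochastic d \<Phi> \<and> rel_entropy (\<Phi> \<rho>) \<sigma> = R"
    using conj_bistochastic[OF uU] eq by (intro exI[of _ "\<lambda>A. U * A * mat_adjoint U"]) simp
  show "\<forall>U. unitary_mat d U \<longrightarrow> rel_entropy (U * \<rho> * mat_adjoint U) \<sigma> \<le> R"
  proof (intro allI impI)
    fix V assume "unitary_mat d V"
    from A conj_bistochastic[OF this] show "rel_entropy (V * \<rho> * mat_adjoint V) \<sigma> \<le> R" by auto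
  qed
qed

end
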